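(* For each $k\ge0$, the $k$-th level $C^{(k)}$ of the coradical filtration of $\mathfrak{S}Sym$ has linear basis $\{1\}\cup\{\mathcal{M}_u: u\in\mathfrak{S}_n,\ n\ge1,\ \#\mathrm{GDes}(u)\le k-1\}$. In particular the space of primitive elements of $\mathfrak{S}Sym$ has linear basis $\{\mathcal{M}_u: u\in\mathfrak{S}_n,\ n\ge1,\ \mathrm{GDes}(u)=\emptyset\}$.
   Context: $\mathfrak{S}Sym$ is the Malvenuto–Reutenauer Hopf algebra over $\mathbb{Q}$: basis $\{\mathcal{F}_u:u\in\mathfrak{S}_n,n\ge0\}$ ($\mathcal{F}$ of the empty permutation is $1$), product $\mathcal{F}_u\cdot\mathcal{F}_v=\sum_\zeta\mathcal{F}_{(u\times v)\zeta^{-1}}$ over $\zeta\in\mathfrak{S}_{p+q}$ increasing on $[1,p]$ and on $[p+1,p+q]$ (for $u\in\mathfrak{S}_p,v\in\mathfrak{S}_q$; $(u\times v)(i)=u_i$ for $i\le p$, $(u\times v)(p+j)=p+v_j$; product of permutations is composition), coproduct $\Delta(\mathcal{F}_u)=\sum_{p=0}^n\mathcal{F}_{\mathrm{st}(u_1..u_p)}\otimes\mathcal{F}_{\mathrm{st}(u_{p+1}..u_n)}$, where $\mathrm{st}$ of a sequence of distinct integers is the permutation with the same relative order. Weak order: $u\le v$ iff $\mathrm{Inv}(u)\subseteq\mathrm{Inv}(v)$, Möbius function $\mu$; $\mathcal{M}_u=\sum_{v\ge u}\mu(u,v)\mathcal{F}_v$. $\mathrm{GDes}(u)=\{p\in[n-1]:u_i>u_j\text{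 for all }i\le p<j\}$. Coradical filtration of a graded connected coalgebra $C$: $C^{(0)}=\mathbb{Q}\cdot1$ (degree 0 part), and $C^{(k)}=(\Delta^{(k)})^{-1}\big(\sum_{i+j=k}C^{\otimes i}\otimes C^{(0)}\otimes C^{\otimes j}\big)$, where $\Delta^{(k)}\colon C\to C^{\otimes k+1}$ is the iterated coproduct. An element $x$ is primitive if $\Delta(x)=x\otimes1+1\otimes x$. *)

theory Defs
  imports Complex_Main "HOL-Library.Function_Algebras"
begin

(* a permutation u of [n] is the word u_1 ... u_n, i.e. a list of distinct
   values with set {1..n}; the empty list is the empty permutation *)
definition is_perm :: "nat list \<Rightarrow> bool" where
  "is_perm u \<longleftrightarrow> distinct u \<and> set u = {1..length u}"

definition st :: "nat list \<Rightarrow> nat list" where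
  "st xs = map (\<lambda>x. card {y \<in> set xs. y \<le> x}) xs"

(* inversions (positions, 0-indexed): i < j and u_i > u_j *)
definition Inv :: "nat list \<Rightarrow> (nat \<times> nat) set" where
  "Inv u = {(i, j). i < j \<and> j < length u \<and> u ! i > u ! j}"

definition weak_le :: "nat list \<Rightarrow> nat list \<Rightarrow> bool" where
  "weak_le u v \<longleftrightarrow> is_perm u \<and> is_perm v \<and> length u = length v \<and> Inv u \<subseteq> Inv v"

lemma finite_Inv: "finite (Inv u)"
proof -
  have "Inv u \<subseteq> {..<length u} \<times> {..<length u}" unfolding Inv_def by auto
  then show ?thesis by (rule finite_subset) auto
qed

lemma perm_nth_card:
  assumes p: "is_perm w" and i: "i < length w"
  shows "w ! i = card {j. j < length w \<and> w ! j \<le> w ! i}"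
proof -
  have inj: "inj_on ((!) w) {j. j < length w \<and> w ! j \<le> w ! i}"
    using p unfolding is_perm_def by (auto simp: inj_on_def nth_eq_iff_index_eq)
  have img: "(!) w ` {j. j < length w \<and> w ! j \<le> w ! i} = {x \<in> set w. x \<le> w ! i}"
    by (auto simp: in_set_conv_nth)
  have "{x \<in> set w. x \<le> w ! i} = {1..w ! i}"
    using p i unfolding is_perm_def by (auto dest: nth_mem)
  then show ?thesis using card_image[OF inj] img by simp
qed

function mobius :: "nat list \<Rightarrow> nat list \<Rightarrow> rat" where
  "mobius u v =
     (if u = v \<and> is_perm u then 1
      else if weak_le u v then
        - (\<Sum>w\<in>{w. weak_le u w \<and> weak_le w v \<and> w \<noteq> v}. mobius u w)
      else 0)"
  by auto
termination
proof (relation "measure (\<lambda>(u, v). card (Inv v))")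
  fix u v w
  assume "w \<in> {w. weak_le u w \<and> weak_le w v \<and> w \<noteq> v}"
  then have le: "Inv w \<subseteq> Inv v" and ne: "w \<noteq> v" and lw: "length w = length v"
    and pw: "is_perm w" and pv: "is_perm v"
    unfolding weak_le_def by auto
  have "Inv w \<noteq> Inv v"
  proof
    assume eq: "Inv w = Inv v"
    have "\<forall>i j. i < length v \<and> j < length v \<longrightarrow> (w ! i < w ! j \<longleftrightarrow> v ! i < v ! j)"
    proof (intro allI impI)
      fix i j assume ij: "i < length v \<and> j < length v"
      show "(w ! i < w ! j \<longleftrightarrow> v ! i < v ! j)"
      proof (cases "i = j")
        case True then show ?thesis by simp
      next
        case False
        have dw: "w ! i \<noteq> w ! j" using pw ij False lw unfolding is_perm_def
          by (simp add: nth_eq_iff_index_eq)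
        have dv: "v ! i \<noteq> v ! j" using pv ij False unfolding is_perm_def
          by (simp add: nth_eq_iff_index_eq)
        show ?thesis
        proof (cases "i < j")
          case True
          have "(i, j) \<in> Inv w \<longleftrightarrow> (i, j) \<in> Inv v" using eq by simp
          then show ?thesis using True ij lw dw dv unfolding Inv_def by auto
        next
          case False
          then have "j < i" using \<open>i \<noteq> j\<close> by simp
          have "(j, i) \<in> Inv w \<longleftrightarrow> (j, i) \<in> Inv v" using eq by simp
          then show ?thesis using \<open>j < i\<close> ij lw dw dv unfolding Inv_def by auto
        qed
      qed
    qed
    moreover have "w = v"
    proof (rule nth_equalityI)
      show "length w = length v" by (rule lw)
    next
      fix i assume i: "i < length w"
      have "{j. j < length w \<and> w ! j \<le> w ! i} = {j. j < length v \<and> v ! j \<le> v ! i}"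
        using calculation i lw by (auto simp: not_less[symmetric])
      then show "w ! i = v ! i"
        using perm_nth_card[OF pw i] perm_nth_card[OF pv] i lw by simp
    qed
    ultimately show False using ne by simp
  qed
  then show "((u, w), u, v) \<in> measure (\<lambda>(u, v). card (Inv v))"
    using le finite_Inv[of v] by (simp add: psubset_card_mono psubsetI)
qed auto


(* elements of SSym: finitely supported Q-valued functions on permutations;
   the coefficient of F_u in x is x u *)
definition SSym :: "(nat list \<Rightarrow> rat) set" where
  "SSym = {x. finite {a. x a \<noteq> 0} \<and> (\<forall>a. x a \<noteq> 0 \<longrightarrow> is_perm a)}"

(* elements of the tensor power SSym^{\<otimes> m}: finitely supported functions on
   m-tuples (lists of length m) of permutations; coefficient of F_{t1}\<otimes>...\<otimes>F_{tm} *)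
definition tensor_pow :: "nat \<Rightarrow> (nat list list \<Rightarrow> rat) set" where
  "tensor_pow m = {y. finite {t. y t \<noteq> 0} \<and>
      (\<forall>t. y t \<noteq> 0 \<longrightarrow> length t = m \<and> (\<forall>a\<in>set t. is_perm a))}"

definition scaleQ :: "rat \<Rightarrow> ('a \<Rightarrow> rat) \<Rightarrow> 'a \<Rightarrow> rat" where
  "scaleQ c f = (\<lambda>a. c * f a)"

definition FF :: "'a \<Rightarrow> 'a \<Rightarrow> rat" where
  "FF u = (\<lambda>v. if v = u then 1 else 0)"

definition one :: "nat list \<Rightarrow> rat" where
  "one = FF []"

definition linext :: "('a \<Rightarrow> 'b \<Rightarrow> rat) \<Rightarrow> ('a \<Rightarrow> rat) \<Rightarrow> 'b \<Rightarrow> rat" where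
  "linext f x = (\<lambda>b. \<Sum>a\<in>{a. x a \<noteq> 0}. x a * f a b)"

definition coprod :: "(nat list \<Rightarrow> rat) \<Rightarrow> nat list list \<Rightarrow> rat" where
  "coprod = linext (\<lambda>u. \<lambda>t. \<Sum>p\<in>{0..length u}. FF [st (take p u), st (drop p u)] t)"

definition tensor2 :: "(nat list \<Rightarrow> rat) \<Rightarrow> (nat list \<Rightarrow> rat) \<Rightarrow> nat list list \<Rightarrow> rat" where
  "tensor2 x y = (\<lambda>t. case t of [a, b] \<Rightarrow> x a * y b | _ \<Rightarrow> 0)"

(* id^{\<otimes> m} \<otimes> Delta on a basis tensor F_{t1}\<otimes>...\<otimes>F_{t(m+1)} *)
definition id_tensor_coprod_basis :: "nat list list \<Rightarrow> nat list list \<Rightarrow> rat" where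
  "id_tensor_coprod_basis t = (\<lambda>s. if t \<noteq> [] \<and> length s = length t + 1 \<and> take (length t - 1) s = butlast t
        then coprod (FF (last t)) (drop (length t - 1) s) else 0)"

(* iterated coproduct Delta^{(k)} : SSym \<rightarrow> SSym^{\<otimes>(k+1)};
   Delta^{(0)} = id, Delta^{(k+1)} = (id^{\<otimes>k} \<otimes> Delta) \<circ> Delta^{(k)} *)
fun iter_coprod :: "nat \<Rightarrow> (nat list \<Rightarrow> rat) \<Rightarrow> nat list list \<Rightarrow> rat" where
  "iter_coprod 0 x = (\<lambda>t. case t of [a] \<Rightarrow> x a | _ \<Rightarrow> 0)"
| "iter_coprod (Suc k) x = linext id_tensor_coprod_basis (iter_coprod k x)"

definition coradical0 :: "(nat list \<Rightarrow> rat) set" where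
  "coradical0 = {scaleQ c one | c. True}"

(* C^{\<otimes> i} \<otimes> C^{(0)} \<otimes> C^{\<otimes> j} inside C^{\<otimes> (i+j+1)}: the span of the basis tensors
   whose (i+1)-st factor is F_{empty} = 1 *)
definition slot_unit :: "nat \<Rightarrow> nat \<Rightarrow> (nat list list \<Rightarrow> rat) set" where
  "slot_unit i j = module.span scaleQ
     {FF t | t. length t = i + j + 1 \<and> (\<forall>a\<in>set t. is_perm a) \<and> t ! i = []}"

definition unit_sum :: "nat \<Rightarrow> (nat list list \<Rightarrow> rat) set" where
  "unit_sum k = {\<lambda>t. \<Sum>i\<in>{0..k}. y i t | y. \<forall>i\<in>{0..k}. y i \<in> slot_unit i (k - i)}"

(* C^{(k)} = (Delta^{(k)})^{-1}(sum_{i+j=k} C^{\<otimes> i} \<otimes> C^{(0)} \<otimes> C^{\<otimes> j});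
   for k = 0 this is C^{(0)} *)
definition coradical :: "nat \<Rightarrow> (nat list \<Rightarrow> rat) set" where
  "coradical k = (if k = 0 then coradical0 else {x \<in> SSym. iter_coprod k x \<in> unit_sum k})"

definition primitives :: "(nat list \<Rightarrow> rat) set" where
  "primitives = {x \<in> SSym. coprod x = (\<lambda>t. tensor2 x one t + tensor2 one x t)}"

definition MM :: "nat list \<Rightarrow> nat list \<Rightarrow> rat" where
  "MM u = (\<lambda>v. if weak_le u v then mobius u v else 0)"

(* GDes(u) = {p \<in> [n-1]. u_i > u_j for all i \<le> p < j}  (1-indexed positions) *)
definition GDes :: "nat list \<Rightarrow> nat set" where
  "GDes u = {p \<in> {1..length u - 1}. \<forall>i j. 1 \<le> i \<and> i \<le> p \<and> p < j \<and> j \<le> length u \<longrightarrow>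
                u ! (i - 1) > u ! (j - 1)}"

end

theory Submission
  imports Defs
begin


interpretation Q: module "scaleQ :: rat \<Rightarrow> ('a \<Rightarrow> rat) \<Rightarrow> ('a \<Rightarrow> rat)"
  by standard (auto simp: scaleQ_def fun_eq_iff algebra_simps)

lemma sum_fun_apply: "(\<Sum>i\<in>I. f i) x = (\<Sum>i\<in>I. f i x)"
  by (induction I rule: infinite_finite_induct) auto

lemma scaleQ_apply[simp]: "scaleQ c f a = c * f a" by (simp add: scaleQ_def)

lemma FF_apply: "FF u v = (if v = u then 1 else 0)" by (simp add: FF_def)

lemma linext_superset:
  assumes "finite A" "{a. x a \<noteq> 0} \<subseteq> A"
  shows "linext f x b = (\<Sum>a\<in>A. x a * f a b)"
  unfolding linext_def using assms by (intro sum.mono_neutral_left) auto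

lemma linext_FF[simp]: "linext f (FF u) = f u"
proof
  fix b show "linext f (FF u) b = f u b"
    by (subst linext_superset[of "{u}"]) (auto simp: FF_apply)
qed

lemma finite_supp_FF[simp]: "finite {a. FF u a \<noteq> 0}"
  by (rule finite_subset[of _ "{u}"]) (auto simp: FF_apply)

lemma linext_add:
  assumes "finite {a. x a \<noteq> 0}" "finite {a. y a \<noteq> 0}"
  shows "linext f (x + y) = linext f x + linext f y"
proof
  fix b
  let ?A = "{a. x a \<noteq> 0} \<union> {a. y a \<noteq> 0}"
  have "linext f (x + y) b = (\<Sum>a\<in>?A. (x + y) a * f a b)"
    using assms by (intro linext_superset) auto
  also have "\<dots> = (\<Sum>a\<in>?A. x a * f a b) + (\<Sum>a\<in>?A. y a * f a b)"
    by (simp add: algebra_simps sum.distrib)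
  also have "\<dots> = linext f x b + linext f y b"
    using assms by (subst (1 2) linext_superset[of ?A]) auto
  finally show "linext f (x + y) b = (linext f x + linext f y) b" by simp
qed

lemma linext_diff:
  assumes "finite {a. x a \<noteq> 0}" "finite {a. y a \<noteq> 0}"
  shows "linext f (x - y) = linext f x - linext f y"
proof
  fix b
  let ?A = "{a. x a \<noteq> 0} \<union> {a. y a \<noteq> 0}"
  have "linext f (x - y) b = (\<Sum>a\<in>?A. (x - y) a * f a b)"
    using assms by (intro linext_superset) auto
  also have "\<dots> = (\<Sum>a\<in>?A. x a * f a b) - (\<Sum>a\<in>?A. y a * f a b)"
    by (simp add: algebra_simps sum_subtractf)
  also have "\<dots> = linext f x b - linext f y b"
    using assms by (subst (1 2) linext_superset[of ?A]) auto
  finally show "linext f (x - y) b = (linext f x - linext f y) b" by simp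
qed

lemma finite_supp_add: "finite {a. x a \<noteq> 0} \<Longrightarrow> finite {a. y a \<noteq> (0::rat)} \<Longrightarrow> finite {a. (x + y) a \<noteq> 0}"
  by (rule finite_subset[of _ "{a. x a \<noteq> 0} \<union> {a. y a \<noteq> 0}"]) auto

lemma finite_supp_sum:
  assumes "finite I" "\<And>i. i \<in> I \<Longrightarrow> finite {a. g i a \<noteq> (0::rat)}"
  shows "finite {a. (\<Sum>i\<in>I. g i) a \<noteq> 0}"
  using assms
proof (induction I rule: finite_induct)
  case empty then show ?case by simp
next
  case (insert i I) then show ?case by (simp add: finite_supp_add[unfolded plus_fun_apply])
qed

lemma linext_sum:
  assumes "finite I" "\<And>i. i \<in> I \<Longrightarrow> finite {a. g i a \<noteq> (0::rat)}"
  shows "linext f (\<Sum>i\<in>I. g i) = (\<Sum>i\<in>I. linext f (g i))"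
  using assms
proof (induction I rule: finite_induct)
  case empty then show ?case by (simp add: linext_def fun_eq_iff)
next
  case (insert i I)
  have "linext f (g i + sum g I) = linext f (g i) + linext f (sum g I)"
    using insert by (intro linext_add) (auto intro: finite_supp_sum)
  moreover have "linext f (sum g I) = (\<Sum>i\<in>I. linext f (g i))" using insert by auto
  ultimately show ?case unfolding sum.insert[OF insert.hyps] by metis
qed

lemma finite_supp_linext:
  assumes "finite {a. x a \<noteq> 0}" "\<And>a. finite {b. f a b \<noteq> 0}"
  shows "finite {b. linext f x b \<noteq> 0}"
proof (rule finite_subset)
  show "{b. linext f x b \<noteq> 0} \<subseteq> (\<Union>a\<in>{a. x a \<noteq> 0}. {b. f a b \<noteq> 0})"
  proof
    fix b assume "b \<in> {b. linext f x b \<noteq> 0}"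
    then obtain a where "x a \<noteq> 0" "x a * f a b \<noteq> 0" unfolding linext_def
      by (metis (mono_tags, lifting) mem_Collect_eq sum.neutral)
    then show "b \<in> (\<Union>a\<in>{a. x a \<noteq> 0}. {b. f a b \<noteq> 0})" by auto
  qed
qed (use assms in auto)

lemma linext_comp:
  assumes fy: "finite {a. y a \<noteq> 0}" and ff: "\<And>r. finite {b. f r b \<noteq> 0}"
  shows "linext g (linext f y) = linext (\<lambda>r. linext g (f r)) y"
proof
  fix b
  let ?R = "{a. y a \<noteq> 0}"
  let ?A = "\<Union>r\<in>?R. {b. f r b \<noteq> 0}"
  have fA: "finite ?A" using fy ff by auto
  have "linext g (linext f y) b = (\<Sum>a\<in>?A. linext f y a * g a b)"
  proof (rule linext_superset[OF fA])
    show "{a. linext f y a \<noteq> 0} \<subseteq> ?A"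
    proof
      fix a assume "a \<in> {a. linext f y a \<noteq> 0}"
      then obtain r where "y r \<noteq> 0" "y r * f r a \<noteq> 0" unfolding linext_def
        by (metis (mono_tags, lifting) mem_Collect_eq sum.neutral)
      then show "a \<in> ?A" by auto
    qed
  qed
  also have "\<dots> = (\<Sum>a\<in>?A. \<Sum>r\<in>?R. y r * f r a * g a b)"
    by (simp add: linext_def sum_distrib_right)
  also have "\<dots> = (\<Sum>r\<in>?R. y r * (\<Sum>a\<in>?A. f r a * g a b))"
    by (subst sum.swap) (simp add: sum_distrib_left mult.assoc)
  also have "\<dots> = (\<Sum>r\<in>?R. y r * linext g (f r) b)"
  proof (rule sum.cong[OF refl])
    fix r assume r: "r \<in> ?R"
    have "linext g (f r) b = (\<Sum>a\<in>?A. f r a * g a b)"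
      using r fA by (intro linext_superset) auto
    then show "y r * (\<Sum>a\<in>?A. f r a * g a b) = y r * linext g (f r) b" by simp
  qed
  also have "\<dots> = linext (\<lambda>r. linext g (f r)) y b" by (simp add: linext_def)
  finally show "linext g (linext f y) b = linext (\<lambda>r. linext g (f r)) y b" .
qed


declare mobius.simps[simp del]

lemma finite_perms_len: "finite {v. is_perm v \<and> length v = n}"
proof (rule finite_subset)
  show "{v. is_perm v \<and> length v = n} \<subseteq> {xs. set xs \<subseteq> {1..n} \<and> length xs = n}"
    by (auto simp: is_perm_def)
  show "finite {xs. set xs \<subseteq> {1..n} \<and> length xs = n}"
    by (rule finite_lists_length_eq) simp
qed

lemma weak_leD: "weak_le u v \<Longrightarrow> is_perm u \<and> is_perm v \<and> length u = length v \<and> Inv u \<subseteq> Inv v"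
  by (simp add: weak_le_def)

lemma finite_down: "finite {v. weak_le v a}"
  by (rule finite_subset[OF _ finite_perms_len[of "length a"]]) (auto simp: weak_le_def)

lemma weak_le_refl: "is_perm u \<Longrightarrow> weak_le u u" by (simp add: weak_le_def)

lemma weak_le_trans: "weak_le u v \<Longrightarrow> weak_le v w \<Longrightarrow> weak_le u w"
  by (auto simp: weak_le_def)

lemma Inv_inj:
  assumes pw: "is_perm w" and pv: "is_perm v" and lw: "length w = length v" and eq: "Inv w = Inv v"
  shows "w = v"
proof -
  have ord: "\<forall>i j. i < length v \<and> j < length v \<longrightarrow> (w ! i < w ! j \<longleftrightarrow> v ! i < v ! j)"
  proof (intro allI impI)
    fix i j assume ij: "i < length v \<and> j < length v"
    show "(w ! i < w ! j \<longleftrightarrow> v ! i < v ! j)"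
    proof (cases "i = j")
      case True then show ?thesis by simp
    next
      case False
      have dw: "w ! i \<noteq> w ! j" using pw ij False lw unfolding is_perm_def
        by (simp add: nth_eq_iff_index_eq)
      have dv: "v ! i \<noteq> v ! j" using pv ij False unfolding is_perm_def
        by (simp add: nth_eq_iff_index_eq)
      show ?thesis
      proof (cases "i < j")
        case True
        have "(i, j) \<in> Inv w \<longleftrightarrow> (i, j) \<in> Inv v" using eq by simp
        then show ?thesis using True ij lw dw dv unfolding Inv_def by auto
      next
        case False
        then have "j < i" using \<open>i \<noteq> j\<close> by simp
        have "(j, i) \<in> Inv w \<longleftrightarrow> (j, i) \<in> Inv v" using eq by simp
        then show ?thesis using \<open>j < i\<close> ij lw dw dv unfolding Inv_def by auto
      qed
    qed
  qed
  show "w = v"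
  proof (rule nth_equalityI)
    show "length w = length v" by (rule lw)
  next
    fix i assume i: "i < length w"
    have "{j. j < length w \<and> w ! j \<le> w ! i} = {j. j < length v \<and> v ! j \<le> v ! i}"
      using ord i lw by (auto simp: not_less[symmetric])
    then show "w ! i = v ! i"
      using perm_nth_card[OF pw i] perm_nth_card[OF pv] i lw by simp
  qed
qed

lemma weak_le_antisym: "weak_le u v \<Longrightarrow> weak_le v u \<Longrightarrow> u = v"
  using Inv_inj by (auto simp: weak_le_def)

lemma weak_le_card_less:
  assumes "weak_le w v" "w \<noteq> v" shows "card (Inv w) < card (Inv v)"
proof -
  have "Inv w \<noteq> Inv v" using assms Inv_inj by (auto simp: weak_le_def)
  then show ?thesis using assms finite_Inv[of v]
    by (auto simp: weak_le_def intro: psubset_card_mono)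
qed

section \<open>Generic triangularity\<close>

lemma tri_zero:
  fixes y :: "'a \<Rightarrow> rat" and f :: "'a \<Rightarrow> nat"
  assumes fin: "finite {s. y s \<noteq> 0}"
    and supp: "\<And>s. y s \<noteq> 0 \<Longrightarrow> s \<in> P"
    and down: "\<And>s t. R s t \<Longrightarrow> t \<in> P \<Longrightarrow> s \<in> P"
    and meas: "\<And>s t. R s t \<Longrightarrow> s \<noteq> t \<Longrightarrow> t \<in> P \<Longrightarrow> f s < f t"
    and rfl: "\<And>t. t \<in> P \<Longrightarrow> R t t"
    and z: "\<And>t. t \<in> P \<Longrightarrow> linext (\<lambda>s t. if R s t then 1 else 0) y t = 0"
  shows "y = 0"
proof -
  have "y t = 0" for t
  proof (induction "f t" arbitrary: t rule: less_induct)
    case less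
    show ?case
    proof (cases "t \<in> P")
      case False then show ?thesis using supp by blast
    next
      case True
      have "0 = (\<Sum>s\<in>{s. y s \<noteq> 0}. y s * (if R s t then 1 else 0))"
        using z[OF True] by (simp add: linext_def)
      also have "\<dots> = (\<Sum>s\<in>{s. y s \<noteq> 0}. if s = t then y s else 0)"
      proof (rule sum.cong[OF refl])
        fix s assume s: "s \<in> {s. y s \<noteq> 0}"
        show "y s * (if R s t then 1 else 0) = (if s = t then y s else 0)"
        proof (cases "s = t")
          case True then show ?thesis using rfl \<open>t \<in> P\<close> by simp
        next
          case False
          have "\<not> R s t"
          proof
            assume "R s t"
            then have "f s < f t" using meas False True by blast
            then have "y s = 0" using less by blast
            then show False using s by simp
          qed
          then show ?thesis using False by simp
        qed
      qed
      also have "\<dots> = y t" using fin by (simp add: sum.delta')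
      finally show ?thesis by simp
    qed
  qed
  then show ?thesis by (simp add: fun_eq_iff)
qed

lemma tri_zero_rev:
  fixes y :: "'a \<Rightarrow> rat"
  assumes down: "\<And>s t. R s t \<Longrightarrow> t \<in> P \<Longrightarrow> s \<in> P"
    and z: "\<And>s. s \<in> P \<Longrightarrow> y s = 0" and t: "t \<in> P"
  shows "linext (\<lambda>s t. if R s t then 1 else 0) y t = 0"
  unfolding linext_def
proof (rule sum.neutral, intro ballI)
  fix s assume "s \<in> {s. y s \<noteq> 0}"
  then show "y s * (if R s t then 1 else 0) = 0" using down z t by fastforce
qed

section \<open>The M-coordinate map\<close>

definition TM :: "(nat list \<Rightarrow> rat) \<Rightarrow> nat list \<Rightarrow> rat" where
  "TM x a = sum x {v. weak_le v a}"

definition z1 :: "nat list \<Rightarrow> nat list \<Rightarrow> rat" where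
  "z1 v a = (if weak_le v a then 1 else 0)"

lemma TM_linext:
  assumes "finite {a. x a \<noteq> 0}"
  shows "TM x = linext z1 x"
proof
  fix a
  have "linext z1 x a = (\<Sum>v\<in>{a. x a \<noteq> 0} \<union> {v. weak_le v a}. x v * z1 v a)"
    using assms finite_down by (intro linext_superset) auto
  also have "\<dots> = (\<Sum>v\<in>{v. weak_le v a}. x v * z1 v a)"
    using assms finite_down by (intro sum.mono_neutral_right) (auto simp: z1_def)
  also have "\<dots> = TM x a" by (simp add: TM_def z1_def)
  finally show "TM x a = linext z1 x a" by simp
qed

lemma TM_add: "TM (x + y) = TM x + TM y"
  by (simp add: TM_def fun_eq_iff sum.distrib)
lemma TM_diff: "TM (x - y) = TM x - TM y"
  by (simp add: TM_def fun_eq_iff sum_subtractf)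
lemma TM_scale: "TM (scaleQ c x) = scaleQ c (TM x)"
  by (simp add: TM_def fun_eq_iff sum_distrib_left)
lemma TM_sum: "TM (\<Sum>i\<in>I. g i) = (\<Sum>i\<in>I. TM (g i))"
proof
  fix a
  have "TM (\<Sum>i\<in>I. g i) a = (\<Sum>v\<in>{v. weak_le v a}. \<Sum>i\<in>I. g i v)"
    by (simp add: TM_def sum_fun_apply)
  also have "\<dots> = (\<Sum>i\<in>I. \<Sum>v\<in>{v. weak_le v a}. g i v)" by (rule sum.swap)
  finally show "TM (\<Sum>i\<in>I. g i) a = (\<Sum>i\<in>I. TM (g i)) a" by (simp add: TM_def sum_fun_apply)
qed
lemma TM_zero[simp]: "TM 0 = 0"
  by (simp add: TM_def fun_eq_iff)

lemma TM_nonzero_perm: "TM x a \<noteq> 0 \<Longrightarrow> is_perm a"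
proof -
  assume "TM x a \<noteq> 0"
  then obtain v where "weak_le v a" unfolding TM_def
    by (metis (no_types, lifting) Collect_empty_eq sum.empty)
  then show ?thesis by (simp add: weak_le_def)
qed

lemma mobius_self: "is_perm u \<Longrightarrow> mobius u u = 1"
  by (subst mobius.simps) simp

lemma MM_self: "is_perm u \<Longrightarrow> MM u u = 1"
  by (simp add: MM_def weak_le_refl mobius_self)

lemma TM_MM: assumes pu: "is_perm u" shows "TM (MM u) = FF u"
proof
  fix a
  have "TM (MM u) a = (\<Sum>v\<in>{v. weak_le v a}. if weak_le u v then mobius u v else 0)"
    by (simp add: TM_def MM_def)
  also have "\<dots> = (\<Sum>v\<in>{v. weak_le u v \<and> weak_le v a}. mobius u v)"
    using finite_down by (subst sum.inter_filter[symmetric]) (auto intro: sum.cong)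
  also have "\<dots> = FF u a"
  proof (cases "weak_le u a")
    case False
    then have E: "{v. weak_le u v \<and> weak_le v a} = {}" using weak_le_trans by blast
    have "a \<noteq> u" using False weak_le_refl pu by blast
    then show ?thesis unfolding E by (simp add: FF_apply)
  next
    case True
    show ?thesis
    proof (cases "a = u")
      case True
      then have E: "{v. weak_le u v \<and> weak_le v a} = {u}" using weak_le_antisym weak_le_refl pu by blast
      show ?thesis unfolding E using True pu by (simp add: FF_apply mobius_self)
    next
      case False
      let ?W = "{w. weak_le u w \<and> weak_le w a \<and> w \<noteq> a}"
      have fW: "finite ?W" by (rule finite_subset[OF _ finite_down[of a]]) auto
      have eq: "{v. weak_le u v \<and> weak_le v a} = insert a ?W"
        using True weak_le_refl weak_leD by blast
      have mu: "mobius u a = - (\<Sum>w\<in>?W. mobius u w)"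
        using False True by (subst mobius.simps) simp
      show ?thesis unfolding eq using fW False by (simp add: mu FF_apply)
    qed
  qed
  finally show "TM (MM u) a = FF u a" .
qed

lemma SSym_supp: "x \<in> SSym \<Longrightarrow> finite {a. x a \<noteq> 0}"
  by (simp add: SSym_def)

lemma SSym_perm: "x \<in> SSym \<Longrightarrow> x a \<noteq> 0 \<Longrightarrow> is_perm a"
  by (simp add: SSym_def)

lemma SSym_add: "x \<in> SSym \<Longrightarrow> y \<in> SSym \<Longrightarrow> x + y \<in> SSym"
  unfolding SSym_def
  by (auto intro: finite_subset[of _ "{a. x a \<noteq> 0} \<union> {a. y a \<noteq> 0}"]) (metis add.right_neutral)

lemma SSym_diff: "x \<in> SSym \<Longrightarrow> y \<in> SSym \<Longrightarrow> x - y \<in> SSym"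
  unfolding SSym_def
  by (auto intro: finite_subset[of _ "{a. x a \<noteq> 0} \<union> {a. y a \<noteq> 0}"]) (metis diff_zero)

lemma SSym_scale: "x \<in> SSym \<Longrightarrow> scaleQ c x \<in> SSym"
  unfolding SSym_def by (auto intro: finite_subset[of _ "{a. x a \<noteq> 0}"])

lemma SSym_zero: "0 \<in> SSym" by (simp add: SSym_def)

lemma SSym_sum: "(\<And>i. i \<in> I \<Longrightarrow> g i \<in> SSym) \<Longrightarrow> (\<Sum>i\<in>I. g i) \<in> SSym"
  by (induction I rule: infinite_finite_induct) (auto intro: SSym_add SSym_zero)

lemma MM_nz: "MM u v \<noteq> 0 \<Longrightarrow> weak_le u v"
  unfolding MM_def by (cases "weak_le u v") auto

lemma MM_SSym: "MM u \<in> SSym"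
  unfolding SSym_def
proof (intro CollectI conjI allI impI)
  show "finite {a. MM u a \<noteq> 0}"
  proof (rule finite_subset[OF _ finite_perms_len[of "length u"]])
    show "{a. MM u a \<noteq> 0} \<subseteq> {v. is_perm v \<and> length v = length u}"
      using MM_nz weak_leD by fastforce
  qed
  show "\<And>a. MM u a \<noteq> 0 \<Longrightarrow> is_perm a" using MM_nz weak_leD by blast
qed

lemma TM_inj: assumes x: "x \<in> SSym" and z: "TM x = 0" shows "x = 0"
proof (rule tri_zero[where P = "{a. is_perm a}" and R = weak_le and f = "\<lambda>a. card (Inv a)"])
  show "finite {s. x s \<noteq> 0}" using x by (simp add: SSym_def)
  show "\<And>s. x s \<noteq> 0 \<Longrightarrow> s \<in> {a. is_perm a}" using x by (simp add: SSym_def)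
  show "\<And>s t. weak_le s t \<Longrightarrow> t \<in> {a. is_perm a} \<Longrightarrow> s \<in> {a. is_perm a}" by (simp add: weak_le_def)
  show "\<And>s t. weak_le s t \<Longrightarrow> s \<noteq> t \<Longrightarrow> t \<in> {a. is_perm a} \<Longrightarrow> card (Inv s) < card (Inv t)"
    by (rule weak_le_card_less)
  show "\<And>t. t \<in> {a. is_perm a} \<Longrightarrow> weak_le t t" by (simp add: weak_le_refl)
  have e: "(\<lambda>s t. if weak_le s t then 1 else 0) = z1" by (simp add: z1_def fun_eq_iff)
  have "linext z1 x = 0" using TM_linext[OF SSym_supp[OF x]] z by simp
  then show "\<And>t. t \<in> {a. is_perm a} \<Longrightarrow> linext (\<lambda>s t. if weak_le s t then 1 else 0) x t = 0"
    unfolding e by simp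
qed

lemma finite_supp_TM: assumes x: "x \<in> SSym" shows "finite {a. TM x a \<noteq> 0}"
proof (rule finite_subset)
  show "{a. TM x a \<noteq> 0} \<subseteq> (\<Union>v\<in>{v. x v \<noteq> 0}. {a. is_perm a \<and> length a = length v})"
  proof
    fix a assume "a \<in> {a. TM x a \<noteq> 0}"
    then obtain v where "v \<in> {v. weak_le v a}" "x v \<noteq> 0" unfolding TM_def
      by (auto elim: sum.not_neutral_contains_not_neutral)
    then show "a \<in> (\<Union>v\<in>{v. x v \<noteq> 0}. {a. is_perm a \<and> length a = length v})"
      by (auto simp: weak_le_def)
  qed
  show "finite (\<Union>v\<in>{v. x v \<noteq> 0}. {a. is_perm a \<and> length a = length v})"
    using SSym_supp[OF x] finite_perms_len by auto
qed

lemma span_MM: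
  assumes S: "S \<subseteq> {u. is_perm u}"
  shows "module.span scaleQ (MM ` S) = {x \<in> SSym. \<forall>a. TM x a \<noteq> 0 \<longrightarrow> a \<in> S}"
proof
  show "module.span scaleQ (MM ` S) \<subseteq> {x \<in> SSym. \<forall>a. TM x a \<noteq> 0 \<longrightarrow> a \<in> S}"
  proof
    fix x assume "x \<in> module.span scaleQ (MM ` S)"
    then show "x \<in> {x \<in> SSym. \<forall>a. TM x a \<noteq> 0 \<longrightarrow> a \<in> S}"
    proof (induction rule: Q.span_induct_alt)
      case base then show ?case by (simp add: SSym_def TM_def)
    next
      case (step c x y)
      then obtain u where u: "u \<in> S" "x = MM u" by auto
      have pu: "is_perm u" using u S by auto
      have "scaleQ c x + y \<in> SSym" using step u pu by (auto intro: SSym_add SSym_scale MM_SSym)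
      moreover have "TM (scaleQ c x + y) a \<noteq> 0 \<Longrightarrow> a \<in> S" for a
        using step u pu by (auto simp: TM_add TM_scale TM_MM FF_apply split: if_splits)
      ultimately show ?case by blast
    qed
  qed
next
  show "{x \<in> SSym. \<forall>a. TM x a \<noteq> 0 \<longrightarrow> a \<in> S} \<subseteq> module.span scaleQ (MM ` S)"
  proof
    fix x assume "x \<in> {x \<in> SSym. \<forall>a. TM x a \<noteq> 0 \<longrightarrow> a \<in> S}"
    then have x: "x \<in> SSym" and xs: "\<And>a. TM x a \<noteq> 0 \<Longrightarrow> a \<in> S" by auto
    let ?A = "{a. TM x a \<noteq> 0}"
    have fA: "finite ?A" by (rule finite_supp_TM[OF x])
    let ?y = "\<Sum>a\<in>?A. scaleQ (TM x a) (MM a)"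
    have yspan: "?y \<in> module.span scaleQ (MM ` S)"
      by (intro Q.span_sum Q.span_scale Q.span_base) (use xs in auto)
    have ySS: "?y \<in> SSym" using xs S by (intro SSym_sum SSym_scale MM_SSym)
    have "TM ?y = TM x"
    proof
      fix b
      have "TM ?y b = (\<Sum>a\<in>?A. TM x a * FF a b)"
        using xs S by (simp add: TM_sum sum_fun_apply TM_scale TM_MM subset_iff)
      also have "\<dots> = (\<Sum>a\<in>?A. if b = a then TM x a else 0)"
        by (intro sum.cong) (auto simp: FF_apply)
      also have "\<dots> = TM x b" using fA by (simp add: sum.delta)
      finally show "TM ?y b = TM x b" .
    qed
    then have "TM (x - ?y) = 0" by (simp add: TM_diff)
    then have "x - ?y = 0" using TM_inj SSym_diff[OF x ySS] by blast
    then have "x = ?y" by simp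
    then show "x \<in> module.span scaleQ (MM ` S)" using yspan by simp
  qed
qed

lemma inj_MM: assumes S: "S \<subseteq> {u. is_perm u}" shows "inj_on MM S"
proof
  fix u v assume "u \<in> S" "v \<in> S" "MM u = MM v"
  then have "FF u = FF v" using TM_MM S by (metis mem_Collect_eq subsetD)
  then show "u = v" by (metis FF_apply one_neq_zero)
qed

lemma indep_MM: assumes S: "S \<subseteq> {u. is_perm u}" shows "\<not> module.dependent scaleQ (MM ` S)"
proof
  assume "module.dependent scaleQ (MM ` S)"
  then obtain t c v0 where t: "finite t" "t \<subseteq> MM ` S" "(\<Sum>v\<in>t. scaleQ (c v) v) = 0"
    and v0: "v0 \<in> t" "c v0 \<noteq> 0"
    unfolding Q.dependent_explicit by blast
  obtain a0 where a0: "a0 \<in> S" "v0 = MM a0" using v0 t by auto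
  have "0 = TM (\<Sum>v\<in>t. scaleQ (c v) v) a0" using t by simp
  also have "\<dots> = (\<Sum>v\<in>t. c v * TM v a0)"
    by (simp add: TM_sum sum_fun_apply TM_scale)
  also have "\<dots> = (\<Sum>v\<in>t. if v = v0 then c v else 0)"
  proof (rule sum.cong[OF refl])
    fix v assume "v \<in> t"
    then obtain b where b: "b \<in> S" "v = MM b" using t by auto
    have "TM v a0 = FF b a0" using b S TM_MM by auto
    moreover have "(v = v0) = (b = a0)" using b a0 inj_MM[OF S] by (auto dest: inj_onD)
    ultimately show "c v * TM v a0 = (if v = v0 then c v else 0)" by (auto simp: FF_apply)
  qed
  also have "\<dots> = c v0" using t v0 by (simp add: sum.delta')
  finally show False using v0 by simp
qed


definition ovr :: "nat list \<Rightarrow> nat list \<Rightarrow> nat list" where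
  "ovr a b = map (\<lambda>x. x + length b) a @ b"

lemma ovr_Nil_right[simp]: "ovr a [] = a" by (simp add: ovr_def)
lemma ovr_Nil_left[simp]: "ovr [] b = b" by (simp add: ovr_def)
lemma length_ovr[simp]: "length (ovr a b) = length a + length b" by (simp add: ovr_def)

lemma nth_ovr1: "i < length a \<Longrightarrow> ovr a b ! i = a ! i + length b"
  by (simp add: ovr_def nth_append)
lemma nth_ovr2: "length a \<le> i \<Longrightarrow> ovr a b ! i = b ! (i - length a)"
  by (simp add: ovr_def nth_append)

lemma perm_nth_range: "is_perm a \<Longrightarrow> i < length a \<Longrightarrow> 1 \<le> a ! i \<and> a ! i \<le> length a"
  unfolding is_perm_def using nth_mem by fastforce

lemma is_perm_ovr:
  assumes a: "is_perm a" and b: "is_perm b" shows "is_perm (ovr a b)"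
proof -
  have da: "distinct (map (\<lambda>x. x + length b) a)" using a
    by (simp add: is_perm_def distinct_map inj_on_def)
  have s1: "set (map (\<lambda>x. x + length b) a) = {length b + 1..length a + length b}"
  proof -
    have "set (map (\<lambda>x. x + length b) a) = (\<lambda>x. x + length b) ` {1..length a}"
      using a by (simp add: is_perm_def)
    also have "\<dots> = {length b + 1..length a + length b}"
      by (auto simp: image_iff intro!: bexI[where x = "x - length b" for x])
    finally show ?thesis .
  qed
  have "distinct (ovr a b)" unfolding ovr_def using da b s1
    by (auto simp: is_perm_def)
  moreover have "set (ovr a b) = {1..length (ovr a b)}"
    unfolding ovr_def using s1 b by (auto simp: is_perm_def)
  ultimately show ?thesis by (simp add: is_perm_def)
qed

section \<open>Standardization\<close>

lemma length_st[simp]: "length (st xs) = length xs" by (simp add: st_def)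

lemma nth_st: "i < length xs \<Longrightarrow> st xs ! i = card {y \<in> set xs. y \<le> xs ! i}"
  by (simp add: st_def)

lemma st_less_iff:
  assumes i: "i < length xs" and j: "j < length xs"
  shows "st xs ! i < st xs ! j \<longleftrightarrow> xs ! i < xs ! j"
proof
  assume lt: "xs ! i < xs ! j"
  have sub: "{y \<in> set xs. y \<le> xs ! i} \<subseteq> {y \<in> set xs. y \<le> xs ! j}" using lt by auto
  have "xs ! j \<in> {y \<in> set xs. y \<le> xs ! j} - {y \<in> set xs. y \<le> xs ! i}"
    using j lt by (auto simp: nth_mem)
  then have "{y \<in> set xs. y \<le> xs ! i} \<subset> {y \<in> set xs. y \<le> xs ! j}"
    using sub by blast
  then show "st xs ! i < st xs ! j" using i j by (simp add: nth_st psubset_card_mono)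
next
  assume "st xs ! i < st xs ! j"
  show "xs ! i < xs ! j"
  proof (rule ccontr)
    assume "\<not> xs ! i < xs ! j"
    then have "{y \<in> set xs. y \<le> xs ! j} \<subseteq> {y \<in> set xs. y \<le> xs ! i}" by auto
    then have "st xs ! j \<le> st xs ! i" using i j by (simp add: nth_st card_mono)
    then show False using \<open>st xs ! i < st xs ! j\<close> by simp
  qed
qed

lemma is_perm_st:
  assumes d: "distinct xs" shows "is_perm (st xs)"
proof -
  have inj: "st xs ! i = st xs ! j \<Longrightarrow> i < length xs \<Longrightarrow> j < length xs \<Longrightarrow> i = j" for i j
  proof -
    assume e: "st xs ! i = st xs ! j" and i: "i < length xs" and j: "j < length xs"
    have "\<not> xs ! i < xs ! j" "\<not> xs ! j < xs ! i" using e st_less_iff[OF i j] st_less_iff[OF j i] by auto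
    then have "xs ! i = xs ! j" by simp
    then show "i = j" using d i j by (simp add: nth_eq_iff_index_eq)
  qed
  have dst: "distinct (st xs)" by (auto simp: distinct_conv_nth inj)
  have sub: "set (st xs) \<subseteq> {1..length xs}"
  proof
    fix v assume "v \<in> set (st xs)"
    then obtain i where i: "i < length xs" "v = st xs ! i" by (auto simp: in_set_conv_nth)
    have "xs ! i \<in> {y \<in> set xs. y \<le> xs ! i}" using i by auto
    then have "1 \<le> card {y \<in> set xs. y \<le> xs ! i}" by (simp add: card_gt_0_iff Suc_le_eq) blast
    moreover have "card {y \<in> set xs. y \<le> xs ! i} \<le> card (set xs)" by (rule card_mono) auto
    ultimately show "v \<in> {1..length xs}" using i d by (simp add: nth_st distinct_card)
  qed
  have "card (set (st xs)) = length xs" using dst by (simp add: distinct_card)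
  then have "set (st xs) = {1..length xs}" using sub by (intro card_subset_eq) auto
  then show ?thesis using dst by (simp add: is_perm_def)
qed

lemma Inv_st: "Inv (st xs) = Inv xs"
  unfolding Inv_def using st_less_iff by auto

lemma Inv_take: "Inv (take p u) = {(i, j) \<in> Inv u. j < p}"
  unfolding Inv_def by auto

lemma Inv_drop: "Inv (drop p u) = {(i, j). (i + p, j + p) \<in> Inv u}"
  unfolding Inv_def by (auto simp: add.commute)

lemma perm_distinct: "is_perm u \<Longrightarrow> distinct u" by (simp add: is_perm_def)

lemma Inv_ovr:
  assumes a: "is_perm a" and b: "is_perm b"
  shows "(i, j) \<in> Inv (ovr a b) \<longleftrightarrow> i < j \<and> j < length a + length b \<and>
     (j < length a \<longrightarrow> (i, j) \<in> Inv a) \<and> (length a \<le> i \<longrightarrow> (i - length a, j - length a) \<in> Inv b)"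
proof (cases "j < length a")
  case True
  then show ?thesis by (auto simp: Inv_def nth_ovr1)
next
  case jn: False
  show ?thesis
  proof (cases "length a \<le> i")
    case True
    then show ?thesis using jn by (auto simp: Inv_def nth_ovr2)
  next
    case False
    have "b ! (j - length a) \<le> length b" if "j < length a + length b"
      using perm_nth_range[OF b] that jn by auto
    moreover have "1 \<le> a ! i" using perm_nth_range[OF a] False by auto
    ultimately show ?thesis using False jn by (auto simp: Inv_def nth_ovr1 nth_ovr2)
  qed
qed

lemma KL:
  assumes u: "is_perm u" and a: "is_perm a" and b: "is_perm b"
    and len: "length u = length a + length b"
  shows "(weak_le (st (take (length a) u)) a \<and> weak_le (st (drop (length a) u)) b) \<longleftrightarrow> weak_le u (ovr a b)"
proof -
  let ?p = "length a"
  have p1: "is_perm (st (take ?p u))" using u by (intro is_perm_st) (simp add: is_perm_def)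
  have p2: "is_perm (st (drop ?p u))" using u by (intro is_perm_st) (simp add: is_perm_def)
  have po: "is_perm (ovr a b)" using a b by (rule is_perm_ovr)
  have "(Inv (take ?p u) \<subseteq> Inv a \<and> Inv (drop ?p u) \<subseteq> Inv b) \<longleftrightarrow> Inv u \<subseteq> Inv (ovr a b)"
  proof
    assume H: "Inv (take ?p u) \<subseteq> Inv a \<and> Inv (drop ?p u) \<subseteq> Inv b"
    show "Inv u \<subseteq> Inv (ovr a b)"
    proof
      fix ij assume ij: "ij \<in> Inv u"
      obtain i j where ij': "ij = (i, j)" by (cases ij)
      have ijb: "i < j" "j < length u" using ij ij' by (auto simp: Inv_def)
      have "j < ?p \<Longrightarrow> (i, j) \<in> Inv a" using H ij ij' by (auto simp: Inv_take)
      moreover have "?p \<le> i \<Longrightarrow> (i - ?p, j - ?p) \<in> Inv b"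
      proof -
        assume "?p \<le> i"
        then have "(i - ?p, j - ?p) \<in> Inv (drop ?p u)" using ij ij' ijb by (auto simp: Inv_drop)
        then show ?thesis using H by auto
      qed
      ultimately show "ij \<in> Inv (ovr a b)" using ij' ijb len by (simp add: Inv_ovr[OF a b])
    qed
  next
    assume H: "Inv u \<subseteq> Inv (ovr a b)"
    show "Inv (take ?p u) \<subseteq> Inv a \<and> Inv (drop ?p u) \<subseteq> Inv b"
    proof
      show "Inv (take ?p u) \<subseteq> Inv a"
      proof
        fix ij assume "ij \<in> Inv (take ?p u)"
        then obtain i j where "ij = (i, j)" "(i, j) \<in> Inv u" "j < ?p" by (auto simp: Inv_take)
        then show "ij \<in> Inv a" using H by (auto simp: Inv_ovr[OF a b])
      qed
      show "Inv (drop ?p u) \<subseteq> Inv b"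
      proof
        fix ij assume "ij \<in> Inv (drop ?p u)"
        then obtain i j where "ij = (i, j)" "(i + ?p, j + ?p) \<in> Inv u" by (auto simp: Inv_drop)
        then show "ij \<in> Inv b" using H by (force simp: Inv_ovr[OF a b])
      qed
    qed
  qed
  then show ?thesis using p1 p2 po u a b len
    by (simp add: weak_le_def Inv_st)
qed

definition zeta :: "nat list list \<Rightarrow> nat list list \<Rightarrow> rat" where
  "zeta s t = (if list_all2 weak_le s t then 1 else 0)"

definition TT :: "(nat list list \<Rightarrow> rat) \<Rightarrow> nat list list \<Rightarrow> rat" where
  "TT y = linext zeta y"

definition cop1 :: "nat list \<Rightarrow> nat list list \<Rightarrow> rat" where
  "cop1 u = (\<lambda>t. \<Sum>p\<in>{0..length u}. FF [st (take p u), st (drop p u)] t)"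

lemma coprod_eq: "coprod = linext cop1" unfolding coprod_def cop1_def[abs_def] ..

lemma cop1_sum: "cop1 u = (\<Sum>p\<in>{0..length u}. FF [st (take p u), st (drop p u)])"
  by (simp add: cop1_def fun_eq_iff sum_fun_apply)

lemma KL_sum:
  assumes u: "is_perm u" and a: "is_perm a" and b: "is_perm b"
  shows "(\<Sum>p\<in>{0..length u}. zeta [st (take p u), st (drop p u)] [a, b]) = z1 u (ovr a b)"
proof (cases "length u = length a + length b")
  case True
  have "(\<Sum>p\<in>{0..length u}. zeta [st (take p u), st (drop p u)] [a, b])
      = (\<Sum>p\<in>{0..length u}. if p = length a then zeta [st (take p u), st (drop p u)] [a, b] else 0)"
  proof (rule sum.cong[OF refl])
    fix p assume p: "p \<in> {0..length u}"
    show "zeta [st (take p u), st (drop p u)] [a, b] = (if p = length a then zeta [st (take p u), st (drop p u)] [a, b] else 0)"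
      using p by (auto simp: zeta_def dest: weak_leD)
  qed
  also have "\<dots> = zeta [st (take (length a) u), st (drop (length a) u)] [a, b]"
    using True by (simp add: sum.delta')
  also have "\<dots> = z1 u (ovr a b)"
    using KL[OF u a b True] by (simp add: zeta_def z1_def)
  finally show ?thesis .
next
  case False
  have "zeta [st (take p u), st (drop p u)] [a, b] = 0" for p
    using False by (auto simp: zeta_def dest!: weak_leD)
  moreover have "z1 u (ovr a b) = 0" using False by (auto simp: z1_def dest!: weak_leD)
  ultimately show ?thesis by simp
qed

lemma TT_cop1:
  assumes u: "is_perm u" and a: "is_perm a" and b: "is_perm b"
  shows "TT (cop1 u) [a, b] = z1 u (ovr a b)"
proof -
  have "TT (cop1 u) [a, b] = (\<Sum>p\<in>{0..length u}. zeta [st (take p u), st (drop p u)] [a, b])"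
    unfolding TT_def cop1_sum by (subst linext_sum) (auto simp: sum_fun_apply)
  then show ?thesis using KL_sum[OF assms] by simp
qed


abbreviation idc where "idc \<equiv> id_tensor_coprod_basis"

lemma append_two_iff:
  "(s = B @ [x, y]) \<longleftrightarrow> (length s = length B + 2 \<and> take (length B) s = B \<and> drop (length B) s = [x, y])"
proof
  assume "length s = length B + 2 \<and> take (length B) s = B \<and> drop (length B) s = [x, y]"
  then show "s = B @ [x, y]" by (metis append_take_drop_id)
qed auto

lemma coprod_FF: "coprod (FF u) = cop1 u" by (simp add: coprod_eq)

lemma idc_Nil: "idc [] = 0"
  by (simp add: id_tensor_coprod_basis_def fun_eq_iff)

lemma idc_eq:
  assumes r: "r \<noteq> []"
  shows "idc r = (\<Sum>p\<in>{0..length (last r)}.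
           FF (butlast r @ [st (take p (last r)), st (drop p (last r))]))"
proof
  fix s
  let ?u = "last r" and ?B = "butlast r"
  have lB: "length ?B = length r - 1" by simp
  have "idc r s = (if length s = length r + 1 \<and> take (length r - 1) s = ?B
        then cop1 ?u (drop (length r - 1) s) else 0)"
    using r by (simp add: id_tensor_coprod_basis_def coprod_FF)
  also have "\<dots> = (\<Sum>p\<in>{0..length ?u}. FF (?B @ [st (take p ?u), st (drop p ?u)]) s)"
  proof (cases "length s = length r + 1 \<and> take (length r - 1) s = ?B")
    case True
    have lr: "length r \<ge> 1" using r by (cases r) auto
    have e: "FF [st (take p ?u), st (drop p ?u)] (drop (length r - 1) s) = FF (?B @ [st (take p ?u), st (drop p ?u)]) s" for p
      using True lr by (simp add: FF_apply append_two_iff[of s ?B])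
    show ?thesis unfolding cop1_def if_P[OF True] using e by simp
  next
    case False
    then show ?thesis
      using r by (auto simp: FF_apply append_two_iff[of s ?B] intro!: sum.neutral)
  qed
  finally show "idc r s = (\<Sum>p\<in>{0..length ?u}. FF (?B @ [st (take p ?u), st (drop p ?u)])) s"
    by (simp add: sum_fun_apply)
qed

lemma finite_supp_idc: "finite {s. idc r s \<noteq> 0}"
proof (cases "r = []")
  case True then show ?thesis by (simp add: idc_Nil)
next
  case False
  then show ?thesis by (simp add: idc_eq finite_supp_sum)
qed

lemma idc_supp:
  assumes nz: "idc r s \<noteq> 0" and pr: "\<forall>a\<in>set r. is_perm a"
  shows "r \<noteq> [] \<and> length s = length r + 1 \<and> (\<forall>a\<in>set s. is_perm a)"
proof -
  have r: "r \<noteq> []" using nz by (auto simp: idc_Nil)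
  then obtain p where "FF (butlast r @ [st (take p (last r)), st (drop p (last r))]) s \<noteq> 0"
    using nz by (auto simp: idc_eq sum_fun_apply elim: sum.not_neutral_contains_not_neutral)
  then have s: "s = butlast r @ [st (take p (last r)), st (drop p (last r))]"
    by (auto simp: FF_apply split: if_splits)
  have pl: "is_perm (last r)" using r pr by simp
  have "\<forall>a\<in>set (butlast r). is_perm a" using pr by (auto dest: in_set_butlastD)
  moreover have "is_perm (st (take p (last r)))" "is_perm (st (drop p (last r)))"
    using pl perm_distinct distinct_take distinct_drop is_perm_st by blast+
  ultimately show ?thesis using s r by auto
qed

lemma TT_FF: "TT (FF s) = zeta s" by (simp add: TT_def)

lemma TT_idc:
  assumes r: "r \<noteq> []" and pr: "\<forall>a\<in>set r. is_perm a"
    and t1: "is_perm t1" and t2: "is_perm t2"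
  shows "TT (idc r) (T' @ [t1, t2]) = zeta r (T' @ [ovr t1 t2])"
proof -
  let ?u = "last r" and ?B = "butlast r"
  have pu: "is_perm ?u" using r pr by simp
  have "TT (idc r) (T' @ [t1, t2]) =
      (\<Sum>p\<in>{0..length ?u}. zeta (?B @ [st (take p ?u), st (drop p ?u)]) (T' @ [t1, t2]))"
    unfolding idc_eq[OF r] TT_def by (subst linext_sum) (auto simp: sum_fun_apply)
  also have "\<dots> = zeta r (T' @ [ovr t1 t2])"
  proof (cases "length ?B = length T'")
    case True
    have "(\<Sum>p\<in>{0..length ?u}. zeta (?B @ [st (take p ?u), st (drop p ?u)]) (T' @ [t1, t2]))
        = (\<Sum>p\<in>{0..length ?u}. zeta ?B T' * zeta [st (take p ?u), st (drop p ?u)] [t1, t2])"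
      using True by (intro sum.cong) (auto simp: zeta_def list_all2_append)
    also have "\<dots> = zeta ?B T' * z1 ?u (ovr t1 t2)"
      by (simp add: sum_distrib_left[symmetric] KL_sum[OF pu t1 t2])
    also have "\<dots> = zeta (?B @ [?u]) (T' @ [ovr t1 t2])"
      using True by (simp add: zeta_def z1_def list_all2_append)
    finally show ?thesis using r by simp
  next
    case False
    have "zeta (?B @ [st (take p ?u), st (drop p ?u)]) (T' @ [t1, t2]) = 0" for p
      using False by (auto simp: zeta_def dest: list_all2_lengthD)
    moreover have "zeta r (T' @ [ovr t1 t2]) = 0"
      using False r by (auto simp: zeta_def dest: list_all2_lengthD)
    ultimately show ?thesis by simp
  qed
  finally show ?thesis .
qed

definition bs :: "nat list list \<Rightarrow> nat list" where
  "bs t = foldr ovr t []"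

lemma bs_merge: "bs (T' @ [ovr t1 t2]) = bs (T' @ [t1, t2])"
  by (simp add: bs_def)

lemma bs_single[simp]: "bs [a] = a" by (simp add: bs_def)

lemma tensor_powD:
  "y \<in> tensor_pow m \<Longrightarrow> finite {t. y t \<noteq> 0} \<and> (\<forall>t. y t \<noteq> 0 \<longrightarrow> length t = m \<and> (\<forall>a\<in>set t. is_perm a))"
  by (simp add: tensor_pow_def)

lemma iter0_tensor: assumes x: "x \<in> SSym" shows "iter_coprod 0 x \<in> tensor_pow 1"
proof -
  let ?y = "iter_coprod 0 x"
  have sub: "{t. ?y t \<noteq> 0} \<subseteq> (\<lambda>a. [a]) ` {a. x a \<noteq> 0}"
  proof
    fix t assume "t \<in> {t. ?y t \<noteq> 0}"
    then show "t \<in> (\<lambda>a. [a]) ` {a. x a \<noteq> 0}"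
      by (cases t rule: list.exhaust; cases "tl t") (auto split: list.splits)
  qed
  have "finite {t. ?y t \<noteq> 0}" using SSym_supp[OF x] by (intro finite_subset[OF sub]) auto
  moreover have "?y t \<noteq> 0 \<Longrightarrow> length t = 1 \<and> (\<forall>a\<in>set t. is_perm a)" for t
    using sub SSym_perm[OF x] by auto
  ultimately show ?thesis by (simp add: tensor_pow_def)
qed

lemma iter0_TT: assumes x: "x \<in> SSym" shows "TT (iter_coprod 0 x) [a] = TM x a"
proof -
  let ?y = "iter_coprod 0 x"
  let ?A = "(\<lambda>b. [b]) ` {b. x b \<noteq> 0}"
  have fx: "finite {b. x b \<noteq> 0}" using SSym_supp[OF x] .
  have sub: "{t. ?y t \<noteq> 0} \<subseteq> ?A"
  proof
    fix t assume "t \<in> {t. ?y t \<noteq> 0}"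
    then show "t \<in> ?A"
      by (cases t rule: list.exhaust; cases "tl t") (auto split: list.splits)
  qed
  have "TT ?y [a] = (\<Sum>s\<in>?A. ?y s * zeta s [a])"
    unfolding TT_def using fx sub by (intro linext_superset) auto
  also have "\<dots> = (\<Sum>b\<in>{b. x b \<noteq> 0}. x b * z1 b a)"
    by (subst sum.reindex) (auto simp: inj_on_def zeta_def z1_def)
  also have "\<dots> = TM x a" using TM_linext[OF fx] by (simp add: linext_def)
  finally show ?thesis .
qed

lemma iter_prop:
  assumes x: "x \<in> SSym"
  shows "iter_coprod k x \<in> tensor_pow (k + 1) \<and>
    (\<forall>t. length t = k + 1 \<longrightarrow> (\<forall>a\<in>set t. is_perm a) \<longrightarrow> TT (iter_coprod k x) t = TM x (bs t))"
proof (induction k)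
  case 0
  have "TT (iter_coprod 0 x) t = TM x (bs t)" if lt: "length t = 1" for t
  proof -
    obtain a where "t = [a]" using lt by (cases t) auto
    then show ?thesis using iter0_TT[OF x] by simp
  qed
  then show ?case using iter0_tensor[OF x] by simp
next
  case (Suc k)
  let ?y = "iter_coprod k x"
  let ?Y = "iter_coprod (Suc k) x"
  have Y: "?Y = linext idc ?y" by simp
  have ty: "?y \<in> tensor_pow (k + 1)" and IH: "\<And>t. length t = k + 1 \<Longrightarrow> (\<forall>a\<in>set t. is_perm a) \<Longrightarrow> TT ?y t = TM x (bs t)"
    using Suc by auto
  have fy: "finite {t. ?y t \<noteq> 0}" and sy: "\<And>t. ?y t \<noteq> 0 \<Longrightarrow> length t = k + 1 \<and> (\<forall>a\<in>set t. is_perm a)"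
    using tensor_powD[OF ty] by auto
  have "finite {t. ?Y t \<noteq> 0}" unfolding Y using fy finite_supp_idc by (rule finite_supp_linext)
  moreover have "length s = Suc k + 1 \<and> (\<forall>a\<in>set s. is_perm a)" if nz: "?Y s \<noteq> 0" for s
  proof -
    obtain r where "r \<in> {t. ?y t \<noteq> 0}" "?y r * idc r s \<noteq> 0"
      using nz unfolding Y linext_def by (auto elim: sum.not_neutral_contains_not_neutral)
    then have "?y r \<noteq> 0" "idc r s \<noteq> 0" by auto
    then show ?thesis using sy idc_supp by fastforce
  qed
  ultimately have tY: "?Y \<in> tensor_pow (Suc k + 1)" by (simp add: tensor_pow_def)
  have "TT ?Y t = TM x (bs t)" if lt: "length t = Suc k + 1" and pt: "\<forall>a\<in>set t. is_perm a" for t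
  proof -
    have d: "length (drop k t) = 2" using lt by simp
    then obtain t1 t2 where d2: "drop k t = [t1, t2]"
      by (metis (no_types) One_nat_def Suc_1 length_0_conv length_Suc_conv)
    define T' where "T' = take k t"
    have t: "t = T' @ [t1, t2]" unfolding T'_def using d2 by (metis append_take_drop_id)
    have p1: "is_perm t1" and p2: "is_perm t2" and pT: "\<forall>a\<in>set T'. is_perm a" using pt t by auto
    have "TT ?Y t = linext (\<lambda>r. TT (idc r)) ?y t"
      unfolding Y TT_def using fy finite_supp_idc by (subst linext_comp) auto
    also have "\<dots> = (\<Sum>r\<in>{r. ?y r \<noteq> 0}. ?y r * zeta r (T' @ [ovr t1 t2]))"
      unfolding linext_def
    proof (rule sum.cong[OF refl])
      fix r assume "r \<in> {r. ?y r \<noteq> 0}"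
      then have "r \<noteq> []" "\<forall>a\<in>set r. is_perm a" using sy by fastforce+
      then show "?y r * TT (idc r) t = ?y r * zeta r (T' @ [ovr t1 t2])"
        using TT_idc p1 p2 t by simp
    qed
    also have "\<dots> = TT ?y (T' @ [ovr t1 t2])" by (simp add: TT_def linext_def)
    also have "\<dots> = TM x (bs (T' @ [ovr t1 t2]))"
      using IH lt t pT is_perm_ovr[OF p1 p2] by simp
    finally show ?thesis using t bs_merge by simp
  qed
  then show ?case using tY by simp
qed


lemma perm_set: "is_perm w \<Longrightarrow> set w = {1..length w}" by (simp add: is_perm_def)

lemma finite_GDes: "finite (GDes u)" unfolding GDes_def by auto

lemma GDes_Nil: "GDes [] = {}" unfolding GDes_def by auto

lemma GDes_range: "p \<in> GDes u \<Longrightarrow> 1 \<le> p \<and> p < length u" unfolding GDes_def by auto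

lemma GDes_ovr_mid:
  assumes a: "is_perm a" and b: "is_perm b" and an: "a \<noteq> []" and bn: "b \<noteq> []"
  shows "length a \<in> GDes (ovr a b)"
  unfolding GDes_def
proof (intro CollectI conjI allI impI)
  show "length a \<in> {1..length (ovr a b) - 1}" using an bn by (cases a; cases b) auto
  fix i j assume ij: "1 \<le> i \<and> i \<le> length a \<and> length a < j \<and> j \<le> length (ovr a b)"
  have "ovr a b ! (i - 1) = a ! (i - 1) + length b" using ij by (intro nth_ovr1) auto
  moreover have "ovr a b ! (j - 1) = b ! (j - 1 - length a)" using ij by (intro nth_ovr2) auto
  moreover have "1 \<le> a ! (i - 1)" using perm_nth_range[OF a, of "i - 1"] ij by auto
  moreover have "b ! (j - 1 - length a) \<le> length b" using perm_nth_range[OF b, of "j - 1 - length a"] ij by auto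
  ultimately show "ovr a b ! (i - 1) > ovr a b ! (j - 1)" by simp
qed

lemma GDes_ovr_shift:
  assumes a: "is_perm a" and b: "is_perm b" and g: "g \<in> GDes b"
  shows "g + length a \<in> GDes (ovr a b)"
  unfolding GDes_def
proof (intro CollectI conjI allI impI)
  have gr: "1 \<le> g" "g < length b" using GDes_range[OF g] by auto
  then show "g + length a \<in> {1..length (ovr a b) - 1}" by auto
  fix i j assume ij: "1 \<le> i \<and> i \<le> g + length a \<and> g + length a < j \<and> j \<le> length (ovr a b)"
  have oj: "ovr a b ! (j - 1) = b ! (j - 1 - length a)" using ij gr by (intro nth_ovr2) auto
  show "ovr a b ! (i - 1) > ovr a b ! (j - 1)"
  proof (cases "i \<le> length a")
    case True
    have "ovr a b ! (i - 1) = a ! (i - 1) + length b" using ij True by (intro nth_ovr1) auto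
    moreover have "1 \<le> a ! (i - 1)" using perm_nth_range[OF a, of "i - 1"] ij True by auto
    moreover have "b ! (j - 1 - length a) \<le> length b" using perm_nth_range[OF b, of "j - 1 - length a"] ij by auto
    ultimately show ?thesis using oj by simp
  next
    case False
    have oi: "ovr a b ! (i - 1) = b ! (i - 1 - length a)" using False by (intro nth_ovr2) auto
    have H: "\<forall>i j. 1 \<le> i \<and> i \<le> g \<and> g < j \<and> j \<le> length b \<longrightarrow> b ! (i - 1) > b ! (j - 1)"
      using g unfolding GDes_def by blast
    have "b ! ((i - length a) - 1) > b ! ((j - length a) - 1)"
    proof (rule H[rule_format])
      show "1 \<le> i - length a \<and> i - length a \<le> g \<and> g < j - length a \<and> j - length a \<le> length b"
        using ij False by simp linarith
    qed
    then show ?thesis using oi oj by (simp add: diff_commute)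
  qed
qed

lemma GDes_ovr_unshift:
  assumes a: "is_perm a" and b: "is_perm b" and g: "g \<in> GDes (ovr a b)" and ga: "length a < g"
  shows "g - length a \<in> GDes b"
  unfolding GDes_def
proof (intro CollectI conjI allI impI)
  have gr: "1 \<le> g" "g < length a + length b" using GDes_range[OF g] by auto
  then show "g - length a \<in> {1..length b - 1}" using ga by auto
  fix i j assume ij: "1 \<le> i \<and> i \<le> g - length a \<and> g - length a < j \<and> j \<le> length b"
  have H: "\<forall>i j. 1 \<le> i \<and> i \<le> g \<and> g < j \<and> j \<le> length (ovr a b) \<longrightarrow> ovr a b ! (i - 1) > ovr a b ! (j - 1)"
    using g unfolding GDes_def by blast
  have "ovr a b ! (i + length a - 1) > ovr a b ! (j + length a - 1)"
  proof (rule H[rule_format])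
    show "1 \<le> i + length a \<and> i + length a \<le> g \<and> g < j + length a \<and> j + length a \<le> length (ovr a b)"
      using ij ga by simp linarith
  qed
  moreover have "ovr a b ! (i + length a - 1) = b ! (i - 1)" using ij by (subst nth_ovr2) auto
  moreover have "ovr a b ! (j + length a - 1) = b ! (j - 1)" using ij by (subst nth_ovr2) auto
  ultimately show "b ! (i - 1) > b ! (j - 1)" by simp
qed

lemma card_le_eq: "x \<le> n \<Longrightarrow> card {y \<in> {1..n}. y \<le> (x::nat)} = x"
proof -
  assume "x \<le> n"
  then have "{y \<in> {1..n}. y \<le> x} = {1..x}" by auto
  then show ?thesis by simp
qed

lemma st_id: assumes "is_perm xs" shows "st xs = xs"
proof (rule nth_equalityI)
  fix i assume i: "i < length (st xs)"
  have "xs ! i \<le> length xs" using perm_nth_range[OF assms] i by simp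
  then show "st xs ! i = xs ! i" using i perm_set[OF assms] card_le_eq[of "xs ! i" "length xs"] by (simp add: nth_st)
qed simp

lemma st_shift:
  assumes d: "distinct xs" and s: "set xs = {q + 1..q + length xs}"
  shows "map (\<lambda>x. x + q) (st xs) = xs"
proof (rule nth_equalityI)
  fix i assume i: "i < length (map (\<lambda>x. x + q) (st xs))"
  then have xi: "xs ! i \<in> {q + 1..q + length xs}" using s nth_mem by fastforce
  have "{y \<in> set xs. y \<le> xs ! i} = {q + 1..xs ! i}" using s xi by auto
  then have "st xs ! i = xs ! i - q" using i by (simp add: nth_st)
  then show "map (\<lambda>x. x + q) (st xs) ! i = xs ! i" using i xi by simp
qed simp

lemma GDes_split:
  assumes w: "is_perm w" and p: "p \<in> GDes w"
  shows "w = ovr (st (take p w)) (st (drop p w))"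
proof -
  let ?n = "length w" let ?q = "length w - p"
  have pr: "1 \<le> p" "p < ?n" using GDes_range[OF p] by auto
  have gd: "\<And>i j. i < p \<Longrightarrow> p \<le> j \<Longrightarrow> j < ?n \<Longrightarrow> w ! i > w ! j"
  proof -
    fix i j assume ij: "i < p" "p \<le> j" "j < ?n"
    have H: "\<forall>i j. 1 \<le> i \<and> i \<le> p \<and> p < j \<and> j \<le> ?n \<longrightarrow> w ! (i - 1) > w ! (j - 1)"
      using p unfolding GDes_def by blast
    show "w ! i > w ! j" using H[rule_format, of "i + 1" "j + 1"] ij by simp
  qed
  have dw: "distinct w" using w by (simp add: is_perm_def)
  have sub: "set (drop p w) \<subseteq> {1..?q}"
  proof
    fix x assume "x \<in> set (drop p w)"
    then obtain i0 where "i0 < length (drop p w)" "x = drop p w ! i0" by (auto simp: in_set_conv_nth)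
    then have j: "p \<le> p + i0" "p + i0 < ?n" "x = w ! (p + i0)" by auto
    define j where "j = p + i0"
    note j = j[folded j_def]
    have "{y \<in> set w. y \<le> x} \<subseteq> set (drop p w)"
    proof
      fix y assume y: "y \<in> {y \<in> set w. y \<le> x}"
      then obtain i where i: "i < ?n" "y = w ! i" by (auto simp: in_set_conv_nth)
      have "\<not> i < p" using gd[of i j] j y i by auto
      then show "y \<in> set (drop p w)" using i by (auto simp: in_set_conv_nth intro!: exI[of _ "i - p"])
    qed
    then have "card {y \<in> set w. y \<le> x} \<le> card (set (drop p w))" by (intro card_mono) auto
    also have "\<dots> = ?q" using dw by (simp add: distinct_card)
    finally have "card {y \<in> set w. y \<le> x} \<le> ?q" .
    moreover have "x \<le> ?n" using perm_nth_range[OF w] j by simp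
    ultimately have "x \<le> ?q" using card_le_eq[of x ?n] perm_set[OF w] by simp
    moreover have "1 \<le> x" using perm_nth_range[OF w] j by simp
    ultimately show "x \<in> {1..?q}" by simp
  qed
  have sd: "set (drop p w) = {1..?q}"
    using dw sub by (intro card_subset_eq) (auto simp: distinct_card)
  have st: "set (take p w) = {?q + 1..?q + length (take p w)}"
  proof -
    have "set (take p w) \<union> set (drop p w) = {1..?n}" using perm_set[OF w]
      by (metis set_append append_take_drop_id)
    moreover have "set (take p w) \<inter> set (drop p w) = {}"
      using dw by (metis distinct_append append_take_drop_id)
    ultimately have "set (take p w) = {1..?n} - {1..?q}" using sd by blast
    also have "\<dots> = {?q + 1..?q + length (take p w)}" using pr by auto
    finally show ?thesis .
  qed
  have e1: "st (drop p w) = drop p w"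
    using sd dw by (intro st_id) (simp add: is_perm_def)
  have e2: "map (\<lambda>x. x + ?q) (st (take p w)) = take p w"
    using dw st by (intro st_shift) auto
  have "ovr (st (take p w)) (st (drop p w)) = take p w @ drop p w"
    unfolding ovr_def e1 using e2 by simp
  then show ?thesis by simp
qed

definition NP :: "nat \<Rightarrow> nat list list set" where
  "NP m = {t. length t = m \<and> (\<forall>a\<in>set t. is_perm a \<and> a \<noteq> [])}"

lemma bs_Cons: "bs (a # t) = ovr a (bs t)" by (simp add: bs_def)

lemma bs_props:
  "t \<noteq> [] \<Longrightarrow> (\<forall>a\<in>set t. is_perm a \<and> a \<noteq> []) \<Longrightarrow>
     is_perm (bs t) \<and> bs t \<noteq> [] \<and> length t - 1 \<le> card (GDes (bs t))"
proof (induction t)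
  case Nil then show ?case by simp
next
  case (Cons a t)
  show ?case
  proof (cases "t = []")
    case True then show ?thesis using Cons by simp
  next
    case False
    have IH: "is_perm (bs t) \<and> bs t \<noteq> [] \<and> length t - 1 \<le> card (GDes (bs t))"
      using Cons False by simp
    have pa: "is_perm a" "a \<noteq> []" using Cons by auto
    have po: "is_perm (ovr a (bs t))" using pa IH is_perm_ovr by blast
    have sub: "insert (length a) ((\<lambda>g. g + length a) ` GDes (bs t)) \<subseteq> GDes (ovr a (bs t))"
      using GDes_ovr_mid[of a "bs t"] GDes_ovr_shift[of a "bs t"] pa IH by auto
    have nin: "length a \<notin> (\<lambda>g. g + length a) ` GDes (bs t)" using GDes_range by fastforce
    have "card (insert (length a) ((\<lambda>g. g + length a) ` GDes (bs t))) = Suc (card (GDes (bs t)))"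
      using nin finite_GDes by (simp add: card_image inj_on_def)
    moreover have "card (insert (length a) ((\<lambda>g. g + length a) ` GDes (bs t))) \<le> card (GDes (ovr a (bs t)))"
      using sub finite_GDes by (intro card_mono) auto
    ultimately have "length (a # t) - 1 \<le> card (GDes (ovr a (bs t)))" using IH False by (cases t) auto
    then show ?thesis using po pa by (simp add: bs_Cons ovr_def)
  qed
qed

lemma bs_surj:
  "is_perm w \<Longrightarrow> w \<noteq> [] \<Longrightarrow> G \<subseteq> GDes w \<Longrightarrow> card G = m \<Longrightarrow>
    \<exists>t. length t = m + 1 \<and> (\<forall>a\<in>set t. is_perm a \<and> a \<noteq> []) \<and> bs t = w"
proof (induction m arbitrary: w G)
  case 0
  then show ?case by (intro exI[of _ "[w]"]) auto
next
  case (Suc m)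
  have fG: "finite G" using Suc.prems finite_GDes finite_subset by blast
  have Gne: "G \<noteq> {}" using Suc.prems by auto
  define p where "p = Min G"
  have pG: "p \<in> G" using fG Gne p_def by simp
  have pmin: "\<And>g. g \<in> G \<Longrightarrow> p \<le> g" using fG p_def by simp
  have pD: "p \<in> GDes w" using pG Suc.prems by auto
  have pr: "1 \<le> p" "p < length w" using GDes_range[OF pD] by auto
  define a where "a = st (take p w)"
  define b where "b = st (drop p w)"
  have dw: "distinct w" using Suc.prems by (simp add: is_perm_def)
  have pa: "is_perm a" unfolding a_def using dw by (intro is_perm_st) simp
  have pb: "is_perm b" unfolding b_def using dw by (intro is_perm_st) simp
  have la: "length a = p" using pr by (simp add: a_def)
  have an: "a \<noteq> []" using pr la by auto
  have lb: "length b = length w - p" by (simp add: b_def)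
  have bn: "b \<noteq> []" using pr lb by auto
  have w: "w = ovr a b" unfolding a_def b_def by (rule GDes_split) (use Suc.prems pD in auto)
  define G' where "G' = (\<lambda>g. g - p) ` (G - {p})"
  have G'sub: "G' \<subseteq> GDes b"
  proof
    fix g' assume "g' \<in> G'"
    then obtain g where g: "g \<in> G" "g \<noteq> p" "g' = g - p" by (auto simp: G'_def)
    have "p < g" using pmin g by force
    moreover have "g \<in> GDes (ovr a b)" using g Suc.prems w by auto
    ultimately show "g' \<in> GDes b" using GDes_ovr_unshift[OF pa pb] la g by auto
  qed
  have "inj_on (\<lambda>g. g - p) (G - {p})"
    using pmin by (force simp: inj_on_def)
  then have cG': "card G' = m" using Suc.prems pG fG by (simp add: G'_def card_image)
  obtain t where t: "length t = m + 1" "\<forall>a\<in>set t. is_perm a \<and> a \<noteq> []" "bs t = b"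
    using Suc.IH[OF pb bn G'sub cG'] by blast
  show ?case
    by (intro exI[of _ "a # t"]) (use t pa an w in \<open>auto simp: bs_Cons\<close>)
qed

lemma bs_image:
  assumes k: "1 \<le> k"
  shows "{bs t | t. t \<in> NP (k + 1)} = {w. is_perm w \<and> k \<le> card (GDes w)}"
proof
  show "{bs t | t. t \<in> NP (k + 1)} \<subseteq> {w. is_perm w \<and> k \<le> card (GDes w)}"
  proof
    fix w assume "w \<in> {bs t | t. t \<in> NP (k + 1)}"
    then obtain t where "t \<in> NP (k + 1)" "w = bs t" by auto
    then have "length t = k + 1" "\<forall>a\<in>set t. is_perm a \<and> a \<noteq> []" "w = bs t" by (auto simp: NP_def)
    moreover then have "t \<noteq> []" by auto
    ultimately show "w \<in> {w. is_perm w \<and> k \<le> card (GDes w)}"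
      using bs_props[of t] by auto
  qed
  show "{w. is_perm w \<and> k \<le> card (GDes w)} \<subseteq> {bs t | t. t \<in> NP (k + 1)}"
  proof
    fix w assume "w \<in> {w. is_perm w \<and> k \<le> card (GDes w)}"
    then have pw: "is_perm w" and c: "k \<le> card (GDes w)" by auto
    have wn: "w \<noteq> []" using c k by (auto simp: GDes_Nil)
    obtain G where "G \<subseteq> GDes w" "card G = k" using c obtain_subset_with_card_n by metis
    then obtain t where "length t = k + 1" "\<forall>a\<in>set t. is_perm a \<and> a \<noteq> []" "bs t = w"
      using bs_surj[OF pw wn] by blast
    then show "w \<in> {bs t | t. t \<in> NP (k + 1)}" by (auto simp: NP_def)
  qed
qed


definition lm :: "nat list list \<Rightarrow> nat" where
  "lm s = sum_list (map (\<lambda>a. card (Inv a)) s)"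

lemma weak_le_card_le: "weak_le x y \<Longrightarrow> card (Inv x) \<le> card (Inv y)"
  using finite_Inv by (auto simp: weak_le_def intro: card_mono)

lemma list_all2_meas:
  "list_all2 weak_le s t \<Longrightarrow> lm s \<le> lm t \<and> (s \<noteq> t \<longrightarrow> lm s < lm t)"
proof (induction rule: list_all2_induct)
  case Nil then show ?case by simp
next
  case (Cons x xs y ys)
  have "card (Inv x) \<le> card (Inv y)" using Cons weak_le_card_le by blast
  moreover have "x \<noteq> y \<Longrightarrow> card (Inv x) < card (Inv y)" using Cons weak_le_card_less by blast
  ultimately show ?case using Cons by (auto simp: lm_def)
qed

lemma list_all2_down:
  "list_all2 weak_le s t \<Longrightarrow> length s = length t \<and> (\<forall>a\<in>set s. is_perm a) \<and>
     ((\<forall>a\<in>set t. a \<noteq> []) \<longrightarrow> (\<forall>a\<in>set s. a \<noteq> []))"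
proof (induction rule: list_all2_induct)
  case Nil then show ?case by simp
next
  case (Cons x xs y ys)
  then show ?case using weak_leD[of x y] by auto
qed

lemma list_all2_refl_perm: "(\<forall>a\<in>set t. is_perm a) \<Longrightarrow> list_all2 weak_le t t"
  by (induction t) (auto simp: weak_le_refl)

lemma zeta_eq: "zeta = (\<lambda>s t. if list_all2 weak_le s t then 1 else 0)"
  by (simp add: zeta_def fun_eq_iff)

lemma NP_down: "list_all2 weak_le s t \<Longrightarrow> t \<in> NP m \<Longrightarrow> s \<in> NP m"
  using list_all2_down[of s t] by (auto simp: NP_def)

lemma TT_NP_iff:
  assumes y: "y \<in> tensor_pow m"
  shows "(\<forall>t\<in>NP m. y t = 0) \<longleftrightarrow> (\<forall>t\<in>NP m. TT y t = 0)"
proof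
  assume H: "\<forall>t\<in>NP m. y t = 0"
  show "\<forall>t\<in>NP m. TT y t = 0"
    unfolding TT_def zeta_eq using H NP_down by (intro ballI tri_zero_rev) auto
next
  assume H: "\<forall>t\<in>NP m. TT y t = 0"
  have fy: "finite {t. y t \<noteq> 0}" using tensor_powD[OF y] by simp
  define y' where "y' = (\<lambda>t. if t \<in> NP m then y t else 0)"
  have fy': "finite {t. y' t \<noteq> 0}" by (rule finite_subset[OF _ fy]) (auto simp: y'_def)
  have eq: "linext zeta y' t = linext zeta y t" if t: "t \<in> NP m" for t
  proof -
    have "linext zeta y' t = (\<Sum>s\<in>{t. y t \<noteq> 0}. y' s * zeta s t)"
      using fy by (intro linext_superset) (auto simp: y'_def)
    also have "\<dots> = (\<Sum>s\<in>{t. y t \<noteq> 0}. y s * zeta s t)"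
      using NP_down t by (intro sum.cong) (auto simp: y'_def zeta_def)
    finally show ?thesis by (simp add: linext_def)
  qed
  have "y' = 0"
  proof (rule tri_zero[where P = "NP m" and R = "list_all2 weak_le" and f = lm])
    show "finite {s. y' s \<noteq> 0}" by (rule fy')
    show "\<And>s. y' s \<noteq> 0 \<Longrightarrow> s \<in> NP m" by (auto simp: y'_def split: if_splits)
    show "\<And>s t. list_all2 weak_le s t \<Longrightarrow> t \<in> NP m \<Longrightarrow> s \<in> NP m" by (rule NP_down)
    show "\<And>s t. list_all2 weak_le s t \<Longrightarrow> s \<noteq> t \<Longrightarrow> t \<in> NP m \<Longrightarrow> lm s < lm t"
      using list_all2_meas by blast
    show "\<And>t. t \<in> NP m \<Longrightarrow> list_all2 weak_le t t"
      by (rule list_all2_refl_perm) (auto simp: NP_def)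
    show "\<And>t. t \<in> NP m \<Longrightarrow> linext (\<lambda>s t. if list_all2 weak_le s t then 1 else 0) y' t = 0"
      using eq H unfolding TT_def zeta_eq by simp
  qed
  show "\<forall>t\<in>NP m. y t = 0"
  proof
    fix t assume t: "t \<in> NP m"
    have "y' t = 0" using \<open>y' = 0\<close> by simp
    then show "y t = 0" using t by (simp add: y'_def)
  qed
qed

lemma slot_zero:
  assumes z: "z \<in> slot_unit i j" and lt: "length t = i + j + 1" and ti: "t ! i \<noteq> []"
  shows "z t = 0"
  using z unfolding slot_unit_def
proof (induction rule: Q.span_induct_alt)
  case base then show ?case by simp
next
  case (step c x y)
  then obtain t' where "x = FF t'" "t' ! i = []" by auto
  then have "x t = 0" using ti by (auto simp: FF_apply)
  then show ?case using step by simp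
qed

lemma unit_sum_iff:
  assumes y: "y \<in> tensor_pow (k + 1)"
  shows "y \<in> unit_sum k \<longleftrightarrow> (\<forall>t\<in>NP (k + 1). y t = 0)"
proof
  assume "y \<in> unit_sum k"
  then obtain Y where Y: "y = (\<lambda>t. \<Sum>i\<in>{0..k}. Y i t)" "\<forall>i\<in>{0..k}. Y i \<in> slot_unit i (k - i)"
    unfolding unit_sum_def by blast
  show "\<forall>t\<in>NP (k + 1). y t = 0"
  proof
    fix t assume t: "t \<in> NP (k + 1)"
    have "Y i t = 0" if i: "i \<in> {0..k}" for i
    proof (rule slot_zero)
      show "Y i \<in> slot_unit i (k - i)" using Y i by auto
      show "length t = i + (k - i) + 1" using t i by (auto simp: NP_def)
      show "t ! i \<noteq> []" using t i by (auto simp: NP_def)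
    qed
    then show "y t = 0" using Y by simp
  qed
next
  assume H: "\<forall>t\<in>NP (k + 1). y t = 0"
  have fy: "finite {t. y t \<noteq> 0}" and sy: "\<And>t. y t \<noteq> 0 \<Longrightarrow> length t = k + 1 \<and> (\<forall>a\<in>set t. is_perm a)"
    using tensor_powD[OF y] by auto
  define Y where "Y = (\<lambda>i t. if t ! i = [] \<and> (\<forall>j<i. t ! j \<noteq> []) then y t else 0)"
  have Yslot: "Y i \<in> slot_unit i (k - i)" if i: "i \<in> {0..k}" for i
  proof -
    let ?A = "{t. Y i t \<noteq> 0}"
    have fA: "finite ?A" by (rule finite_subset[OF _ fy]) (auto simp: Y_def)
    have "Y i = (\<Sum>s\<in>?A. scaleQ (Y i s) (FF s))"
    proof
      fix t
      have "(\<Sum>s\<in>?A. scaleQ (Y i s) (FF s)) t = (\<Sum>s\<in>?A. if t = s then Y i s else 0)"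
        by (simp add: sum_fun_apply FF_apply) (rule sum.cong, auto)
      also have "\<dots> = Y i t" using fA by (simp add: sum.delta)
      finally show "Y i t = (\<Sum>s\<in>?A. scaleQ (Y i s) (FF s)) t" by simp
    qed
    also have "\<dots> \<in> slot_unit i (k - i)"
      unfolding slot_unit_def
    proof (intro Q.span_sum Q.span_scale Q.span_base)
      fix s assume s: "s \<in> ?A"
      then have "y s \<noteq> 0" "s ! i = []" by (auto simp: Y_def split: if_splits)
      then show "FF s \<in> {FF t |t. length t = i + (k - i) + 1 \<and> (\<forall>a\<in>set t. is_perm a) \<and> t ! i = []}"
        using sy i by auto
    qed
    finally show ?thesis .
  qed
  have ysum: "y = (\<lambda>t. \<Sum>i\<in>{0..k}. Y i t)"
  proof
    fix t
    show "y t = (\<Sum>i\<in>{0..k}. Y i t)"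
    proof (cases "y t = 0")
      case True then show ?thesis by (simp add: Y_def) (rule sum.neutral, simp)
    next
      case False
      then have lt: "length t = k + 1" and pt: "\<forall>a\<in>set t. is_perm a" using sy by auto
      have "t \<notin> NP (k + 1)" using H False by auto
      then have "\<exists>j. t ! j = [] \<and> j \<le> k" using lt pt by (auto simp: NP_def in_set_conv_nth)
      then obtain j0 where j0: "t ! j0 = []" "j0 \<le> k" by blast
      define i0 where "i0 = (LEAST j. t ! j = [])"
      have i0: "t ! i0 = []" unfolding i0_def using j0(1) by (rule LeastI)
      have i0le: "i0 \<le> k" unfolding i0_def using j0 Least_le[of "\<lambda>j. t ! j = []" j0] by simp
      have i0min: "\<And>j. j < i0 \<Longrightarrow> t ! j \<noteq> []" unfolding i0_def by (rule not_less_Least)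
      have "(\<Sum>i\<in>{0..k}. Y i t) = (\<Sum>i\<in>{0..k}. if i = i0 then y t else 0)"
      proof (rule sum.cong[OF refl])
        fix i assume "i \<in> {0..k}"
        have "(t ! i = [] \<and> (\<forall>j<i. t ! j \<noteq> [])) \<longleftrightarrow> i = i0"
        proof
          assume a: "t ! i = [] \<and> (\<forall>j<i. t ! j \<noteq> [])"
          have "\<not> i < i0" using a i0min by blast
          moreover have "\<not> i0 < i" using a i0 by blast
          ultimately show "i = i0" by simp
        next
          assume "i = i0"
          then show "t ! i = [] \<and> (\<forall>j<i. t ! j \<noteq> [])" using i0 i0min by blast
        qed
        then show "Y i t = (if i = i0 then y t else 0)" by (simp add: Y_def)
      qed
      also have "\<dots> = y t" using i0le by simp
      finally show ?thesis by simp
    qed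
  qed
  show "y \<in> unit_sum k" unfolding unit_sum_def using ysum Yslot by blast
qed


lemma coradical_char:
  assumes k: "1 \<le> k"
  shows "coradical k = {x \<in> SSym. \<forall>w. is_perm w \<and> k \<le> card (GDes w) \<longrightarrow> TM x w = 0}"
proof -
  have "x \<in> coradical k \<longleftrightarrow> (\<forall>w. is_perm w \<and> k \<le> card (GDes w) \<longrightarrow> TM x w = 0)" if x: "x \<in> SSym" for x
  proof -
    let ?y = "iter_coprod k x"
    have ty: "?y \<in> tensor_pow (k + 1)" and TTy: "\<And>t. length t = k + 1 \<Longrightarrow> (\<forall>a\<in>set t. is_perm a) \<Longrightarrow> TT ?y t = TM x (bs t)"
      using iter_prop[OF x, of k] by auto
    have "x \<in> coradical k \<longleftrightarrow> ?y \<in> unit_sum k" using k x by (simp add: coradical_def)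
    also have "\<dots> \<longleftrightarrow> (\<forall>t\<in>NP (k + 1). ?y t = 0)" by (rule unit_sum_iff[OF ty])
    also have "\<dots> \<longleftrightarrow> (\<forall>t\<in>NP (k + 1). TT ?y t = 0)" by (rule TT_NP_iff[OF ty])
    also have "\<dots> \<longleftrightarrow> (\<forall>t\<in>NP (k + 1). TM x (bs t) = 0)"
      using TTy by (auto simp: NP_def)
    also have "\<dots> \<longleftrightarrow> (\<forall>w\<in>{bs t | t. t \<in> NP (k + 1)}. TM x w = 0)" by blast
    also have "\<dots> \<longleftrightarrow> (\<forall>w. is_perm w \<and> k \<le> card (GDes w) \<longrightarrow> TM x w = 0)"
      unfolding bs_image[OF k] by blast
    finally show ?thesis .
  qed
  moreover have "coradical k \<subseteq> SSym" using k by (auto simp: coradical_def)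
  ultimately show ?thesis by blast
qed

lemma weak_le_Nil: "weak_le [] v \<longleftrightarrow> v = []"
  by (auto simp: weak_le_def is_perm_def)

lemma MM_Nil: "MM [] = one"
proof
  fix v
  have pn: "is_perm []" by (simp add: is_perm_def)
  show "MM [] v = one v"
  proof (cases "v = []")
    case True then show ?thesis using pn weak_le_refl[OF pn] mobius_self[OF pn]
      unfolding MM_def one_def FF_apply by simp
  next
    case False then show ?thesis unfolding MM_def one_def FF_apply weak_le_Nil by simp
  qed
qed

lemma part_k:
  fixes k :: nat
  defines "S \<equiv> {u. is_perm u \<and> length u \<ge> 1 \<and> int (card (GDes u)) \<le> int k - 1}"
  shows "one \<notin> MM ` S \<and> inj_on MM S \<and> \<not> module.dependent scaleQ (insert one (MM ` S))
     \<and> module.span scaleQ (insert one (MM ` S)) = coradical k"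
proof -
  have pn: "is_perm []" by (simp add: is_perm_def)
  have S0: "insert [] S \<subseteq> {u. is_perm u}" using pn by (auto simp: S_def)
  have ins: "insert one (MM ` S) = MM ` (insert [] S)" by (simp add: MM_Nil)
  have nS: "[] \<notin> S" by (simp add: S_def)
  have inj: "inj_on MM (insert [] S)" by (rule inj_MM[OF S0])
  have c1: "one \<notin> MM ` S"
  proof
    assume "one \<in> MM ` S"
    then obtain u where uS: "u \<in> S" and uM: "MM u = MM []" by (auto simp: MM_Nil)
    have "u \<in> insert [] S" "[] \<in> insert [] S" using uS by auto
    then have "u = []" using inj_onD[OF inj uM] by blast
    then show False using uS nS by simp
  qed
  have c2: "inj_on MM S" using inj by (rule inj_on_subset) auto
  have c3: "\<not> module.dependent scaleQ (insert one (MM ` S))" unfolding ins by (rule indep_MM[OF S0])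
  have c4: "module.span scaleQ (insert one (MM ` S)) = coradical k"
  proof (cases "k = 0")
    case True
    then have "S = {}" by (auto simp: S_def)
    then have e: "insert one (MM ` S) = {one}" by simp
    have "coradical k = range (\<lambda>c. scaleQ c one)" using True
      unfolding coradical_def coradical0_def by auto
    then show ?thesis unfolding e Q.span_singleton by simp
  next
    case False
    then have k: "1 \<le> k" by simp
    have iff: "(a \<in> insert [] S) \<longleftrightarrow> \<not> (k \<le> card (GDes a))" if pa: "is_perm a" for a
    proof (cases "a = []")
      case True then show ?thesis using k by (simp add: GDes_Nil)
    next
      case False
      then have "length a \<ge> 1" by (cases a) auto
      then have "a \<in> S \<longleftrightarrow> int (card (GDes a)) \<le> int k - 1" using pa by (simp add: S_def)
      also have "\<dots> \<longleftrightarrow> \<not> (k \<le> card (GDes a))" by linarith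
      finally show ?thesis using False by simp
    qed
    have "module.span scaleQ (insert one (MM ` S)) = {x \<in> SSym. \<forall>a. TM x a \<noteq> 0 \<longrightarrow> a \<in> insert [] S}"
      unfolding ins by (rule span_MM[OF S0])
    also have "\<dots> = {x \<in> SSym. \<forall>w. is_perm w \<and> k \<le> card (GDes w) \<longrightarrow> TM x w = 0}"
    proof (intro Collect_cong conj_cong refl iffI allI impI)
      fix x w
      assume H: "\<forall>a. TM x a \<noteq> 0 \<longrightarrow> a \<in> insert [] S" and w: "is_perm w \<and> k \<le> card (GDes w)"
      show "TM x w = 0"
      proof (rule ccontr)
        assume "TM x w \<noteq> 0"
        then have "w \<in> insert [] S" using H by blast
        then show False using iff w by blast
      qed
    next
      fix x a
      assume H: "\<forall>w. is_perm w \<and> k \<le> card (GDes w) \<longrightarrow> TM x w = 0" and a: "TM x a \<noteq> 0"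
      have pa: "is_perm a" using a by (rule TM_nonzero_perm)
      then have "\<not> (k \<le> card (GDes a))" using H a by blast
      then show "a \<in> insert [] S" using iff[OF pa] by blast
    qed
    also have "\<dots> = coradical k" using coradical_char[OF k] by simp
    finally show ?thesis .
  qed
  show ?thesis using c1 c2 c3 c4 by blast
qed


lemma linext_nz: assumes nz: "linext f x s \<noteq> 0" shows "\<exists>v. x v \<noteq> 0 \<and> f v s \<noteq> 0"
proof -
  obtain v where "v \<in> {a. x a \<noteq> 0}" "x v * f v s \<noteq> 0"
    using nz unfolding linext_def by (rule sum.not_neutral_contains_not_neutral)
  then show ?thesis by auto
qed

lemma finite_supp_cop1: "finite {s. cop1 u s \<noteq> 0}"
  unfolding cop1_sum by (rule finite_supp_sum) auto

lemma cop1_nz: "cop1 u s \<noteq> 0 \<Longrightarrow> \<exists>p. s = [st (take p u), st (drop p u)]"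
  unfolding cop1_def by (auto simp: FF_apply elim!: sum.not_neutral_contains_not_neutral split: if_splits)

lemma tensor2_x_one:
  assumes fx: "finite {a. x a \<noteq> 0}"
  shows "tensor2 x one = linext (\<lambda>v. FF [v, []]) x"
proof
  fix t
  show "tensor2 x one t = linext (\<lambda>v. FF [v, []]) x t"
  proof (cases "\<exists>a. t = [a, []]")
    case True
    then obtain a where t: "t = [a, []]" by blast
    have "linext (\<lambda>v. FF [v, []]) x t = (\<Sum>v\<in>{a. x a \<noteq> 0}. if v = a then x v else 0)"
      unfolding linext_def t by (intro sum.cong) (auto simp: FF_apply)
    also have "\<dots> = x a" using fx by (simp add: sum.delta')
    finally show ?thesis by (simp add: t tensor2_def one_def FF_apply)
  next
    case False
    have "linext (\<lambda>v. FF [v, []]) x t = 0"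
      unfolding linext_def using False by (intro sum.neutral) (auto simp: FF_apply)
    moreover have "tensor2 x one t = 0" using False
      by (auto simp: tensor2_def one_def FF_apply split: list.splits)
    ultimately show ?thesis by simp
  qed
qed

lemma tensor2_one_x:
  assumes fx: "finite {a. x a \<noteq> 0}"
  shows "tensor2 one x = linext (\<lambda>v. FF [[], v]) x"
proof
  fix t
  show "tensor2 one x t = linext (\<lambda>v. FF [[], v]) x t"
  proof (cases "\<exists>a. t = [[], a]")
    case True
    then obtain a where t: "t = [[], a]" by blast
    have "linext (\<lambda>v. FF [[], v]) x t = (\<Sum>v\<in>{a. x a \<noteq> 0}. if v = a then x v else 0)"
      unfolding linext_def t by (intro sum.cong) (auto simp: FF_apply)
    also have "\<dots> = x a" using fx by (simp add: sum.delta')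
    finally show ?thesis by (simp add: t tensor2_def one_def FF_apply)
  next
    case False
    have "linext (\<lambda>v. FF [[], v]) x t = 0"
      unfolding linext_def using False by (intro sum.neutral) (auto simp: FF_apply)
    moreover have "tensor2 one x t = 0" using False
      by (auto simp: tensor2_def one_def FF_apply split: list.splits)
    ultimately show ?thesis by simp
  qed
qed

lemma TT_L1:
  assumes fx: "finite {a. x a \<noteq> 0}" and b: "is_perm b"
  shows "TT (linext (\<lambda>v. FF [v, []]) x) [a, b] = (if b = [] then TM x a else 0)"
proof -
  have "TT (linext (\<lambda>v. FF [v, []]) x) [a, b] = linext (\<lambda>v. zeta [v, []]) x [a, b]"
    unfolding TT_def using fx by (subst linext_comp) (auto simp: TT_FF[unfolded TT_def])
  also have "\<dots> = (\<Sum>v\<in>{a. x a \<noteq> 0}. x v * (if b = [] then z1 v a else 0))"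
    unfolding linext_def by (intro sum.cong) (auto simp: zeta_def z1_def weak_le_Nil)
  also have "\<dots> = (if b = [] then TM x a else 0)"
    using TM_linext[OF fx] by (simp add: linext_def)
  finally show ?thesis .
qed

lemma TT_L2:
  assumes fx: "finite {a. x a \<noteq> 0}" and a: "is_perm a"
  shows "TT (linext (\<lambda>v. FF [[], v]) x) [a, b] = (if a = [] then TM x b else 0)"
proof -
  have "TT (linext (\<lambda>v. FF [[], v]) x) [a, b] = linext (\<lambda>v. zeta [[], v]) x [a, b]"
    unfolding TT_def using fx by (subst linext_comp) (auto simp: TT_FF[unfolded TT_def])
  also have "\<dots> = (\<Sum>v\<in>{a. x a \<noteq> 0}. x v * (if a = [] then z1 v b else 0))"
    unfolding linext_def by (intro sum.cong) (auto simp: zeta_def z1_def weak_le_Nil)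
  also have "\<dots> = (if a = [] then TM x b else 0)"
    using TM_linext[OF fx] by (simp add: linext_def)
  finally show ?thesis .
qed

lemma TT_coprod:
  assumes x: "x \<in> SSym" and a: "is_perm a" and b: "is_perm b"
  shows "TT (coprod x) [a, b] = TM x (ovr a b)"
proof -
  have fx: "finite {a. x a \<noteq> 0}" using SSym_supp[OF x] .
  have "TT (coprod x) [a, b] = linext (\<lambda>u. TT (cop1 u)) x [a, b]"
    unfolding TT_def coprod_eq using fx finite_supp_cop1 by (subst linext_comp) auto
  also have "\<dots> = (\<Sum>v\<in>{a. x a \<noteq> 0}. x v * z1 v (ovr a b))"
    unfolding linext_def
  proof (rule sum.cong[OF refl])
    fix v assume "v \<in> {a. x a \<noteq> 0}"
    then have "is_perm v" using SSym_perm[OF x] by simp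
    then show "x v * TT (cop1 v) [a, b] = x v * z1 v (ovr a b)" using TT_cop1 a b by simp
  qed
  also have "\<dots> = TM x (ovr a b)" using TM_linext[OF fx] by (simp add: linext_def)
  finally show ?thesis .
qed

lemma TT_len2:
  assumes "\<And>s. y s \<noteq> 0 \<Longrightarrow> length s = 2" and "length t \<noteq> 2"
  shows "TT y t = 0"
  unfolding TT_def linext_def
proof (intro sum.neutral ballI)
  fix s assume "s \<in> {a. y a \<noteq> 0}"
  then have "length s = 2" using assms by auto
  then have "\<not> list_all2 weak_le s t" using assms list_all2_lengthD by fastforce
  then show "y s * zeta s t = 0" by (simp add: zeta_def)
qed

lemma prim_iff:
  assumes x: "x \<in> SSym"
  shows "coprod x = (\<lambda>t. tensor2 x one t + tensor2 one x t) \<longleftrightarrow>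
    (\<forall>a b. is_perm a \<longrightarrow> is_perm b \<longrightarrow>
       TM x (ovr a b) = (if b = [] then TM x a else 0) + (if a = [] then TM x b else 0))"
proof -
  have fx: "finite {a. x a \<noteq> 0}" using SSym_supp[OF x] .
  define L1 where "L1 = linext (\<lambda>v. FF [v, []]) x"
  define L2 where "L2 = linext (\<lambda>v. FF [[], v]) x"
  have R: "(\<lambda>t. tensor2 x one t + tensor2 one x t) = L1 + L2"
    unfolding L1_def L2_def tensor2_x_one[OF fx, symmetric] tensor2_one_x[OF fx, symmetric]
    by (simp add: fun_eq_iff)
  have f1: "finite {t. L1 t \<noteq> 0}" unfolding L1_def using fx by (rule finite_supp_linext) simp
  have f2: "finite {t. L2 t \<noteq> 0}" unfolding L2_def using fx by (rule finite_supp_linext) simp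
  have fc: "finite {t. coprod x t \<noteq> 0}" unfolding coprod_eq using fx finite_supp_cop1 by (rule finite_supp_linext)
  have f12: "finite {t. (L1 + L2) t \<noteq> 0}" using f1 f2 by (rule finite_supp_add)
  have TTadd: "TT (L1 + L2) = TT L1 + TT L2" unfolding TT_def using f1 f2 by (rule linext_add)
  have s1: "L1 s \<noteq> 0 \<Longrightarrow> length s = 2 \<and> (\<forall>a\<in>set s. is_perm a)" for s
    unfolding L1_def using SSym_perm[OF x] by (auto dest!: linext_nz simp: FF_apply is_perm_def split: if_splits)
  have s2: "L2 s \<noteq> 0 \<Longrightarrow> length s = 2 \<and> (\<forall>a\<in>set s. is_perm a)" for s
    unfolding L2_def using SSym_perm[OF x] by (auto dest!: linext_nz simp: FF_apply is_perm_def split: if_splits)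
  have sc: "coprod x s \<noteq> 0 \<Longrightarrow> length s = 2 \<and> (\<forall>a\<in>set s. is_perm a)" for s
  proof -
    assume "coprod x s \<noteq> 0"
    then obtain v where v: "x v \<noteq> 0" "cop1 v s \<noteq> 0" unfolding coprod_eq by (auto dest!: linext_nz)
    then obtain p where s: "s = [st (take p v), st (drop p v)]" using cop1_nz by blast
    have "distinct v" using SSym_perm[OF x v(1)] by (simp add: is_perm_def)
    then show ?thesis using s by (auto intro!: is_perm_st)
  qed
  show ?thesis
  proof
    assume H: "coprod x = (\<lambda>t. tensor2 x one t + tensor2 one x t)"
    show "\<forall>a b. is_perm a \<longrightarrow> is_perm b \<longrightarrow>
       TM x (ovr a b) = (if b = [] then TM x a else 0) + (if a = [] then TM x b else 0)"
    proof (intro allI impI)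
      fix a b assume a: "is_perm a" and b: "is_perm b"
      have "TM x (ovr a b) = TT (coprod x) [a, b]" using TT_coprod[OF x a b] by simp
      also have "\<dots> = TT L1 [a, b] + TT L2 [a, b]" using H R TTadd by simp
      also have "\<dots> = (if b = [] then TM x a else 0) + (if a = [] then TM x b else 0)"
        unfolding L1_def L2_def using TT_L1[OF fx b] TT_L2[OF fx a] by simp
      finally show "TM x (ovr a b) = (if b = [] then TM x a else 0) + (if a = [] then TM x b else 0)" .
    qed
  next
    assume H: "\<forall>a b. is_perm a \<longrightarrow> is_perm b \<longrightarrow>
       TM x (ovr a b) = (if b = [] then TM x a else 0) + (if a = [] then TM x b else 0)"
    define D where "D = coprod x - (L1 + L2)"
    have fD: "finite {t. D t \<noteq> 0}" unfolding D_def
      by (rule finite_subset[of _ "{t. coprod x t \<noteq> 0} \<union> {t. (L1 + L2) t \<noteq> 0}"]) (use fc f12 in auto)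
    have sD: "D s \<noteq> 0 \<Longrightarrow> length s = 2 \<and> (\<forall>a\<in>set s. is_perm a)" for s
      unfolding D_def using sc s1 s2 by (cases "coprod x s = 0"; cases "L1 s = 0"; auto)
    have TTD: "TT D = TT (coprod x) - TT (L1 + L2)" unfolding TT_def D_def using fc f12 by (rule linext_diff)
    have "D = 0"
    proof (rule tri_zero[where P = "{t. \<forall>a\<in>set t. is_perm a}" and R = "list_all2 weak_le" and f = lm])
      show "finite {s. D s \<noteq> 0}" by (rule fD)
      show "\<And>s. D s \<noteq> 0 \<Longrightarrow> s \<in> {t. \<forall>a\<in>set t. is_perm a}" using sD by blast
      show "\<And>s t. list_all2 weak_le s t \<Longrightarrow> t \<in> {t. \<forall>a\<in>set t. is_perm a} \<Longrightarrow> s \<in> {t. \<forall>a\<in>set t. is_perm a}"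
        using list_all2_down by blast
      show "\<And>s t. list_all2 weak_le s t \<Longrightarrow> s \<noteq> t \<Longrightarrow> t \<in> {t. \<forall>a\<in>set t. is_perm a} \<Longrightarrow> lm s < lm t"
        using list_all2_meas by blast
      show "\<And>t. t \<in> {t. \<forall>a\<in>set t. is_perm a} \<Longrightarrow> list_all2 weak_le t t"
        using list_all2_refl_perm by blast
      fix t assume t: "t \<in> {t. \<forall>a\<in>set t. is_perm a}"
      have "TT D t = 0"
      proof (cases "length t = 2")
        case True
        then obtain a b where tab: "t = [a, b]" by (metis (no_types) One_nat_def Suc_1 length_0_conv length_Suc_conv)
        have a: "is_perm a" and b: "is_perm b" using t tab by auto
        have "TT D t = TM x (ovr a b) - (TT L1 [a, b] + TT L2 [a, b])"
          using TTD TTadd TT_coprod[OF x a b] tab by simp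
        also have "\<dots> = 0"
          unfolding L1_def L2_def using TT_L1[OF fx b] TT_L2[OF fx a] H a b by simp
        finally show ?thesis .
      next
        case False
        then show ?thesis using TT_len2 sD by blast
      qed
      then show "linext (\<lambda>s t. if list_all2 weak_le s t then 1 else 0) D t = 0"
        unfolding TT_def zeta_eq .
    qed
    then show "coprod x = (\<lambda>t. tensor2 x one t + tensor2 one x t)" unfolding R D_def by simp
  qed
qed

lemma prim_char:
  defines "Sp \<equiv> {u. is_perm u \<and> length u \<ge> 1 \<and> GDes u = {}}"
  shows "primitives = {x \<in> SSym. \<forall>a. TM x a \<noteq> 0 \<longrightarrow> a \<in> Sp}"
proof -
  have "x \<in> primitives \<longleftrightarrow> (\<forall>a. TM x a \<noteq> 0 \<longrightarrow> a \<in> Sp)" if x: "x \<in> SSym" for x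
  proof -
    have "x \<in> primitives \<longleftrightarrow> (\<forall>a b. is_perm a \<longrightarrow> is_perm b \<longrightarrow>
       TM x (ovr a b) = (if b = [] then TM x a else 0) + (if a = [] then TM x b else 0))"
      using prim_iff[OF x] x by (simp add: primitives_def)
    also have "\<dots> \<longleftrightarrow> (\<forall>a. TM x a \<noteq> 0 \<longrightarrow> a \<in> Sp)"
    proof
      assume H: "\<forall>a b. is_perm a \<longrightarrow> is_perm b \<longrightarrow>
        TM x (ovr a b) = (if b = [] then TM x a else 0) + (if a = [] then TM x b else 0)"
      have pn: "is_perm []" by (simp add: is_perm_def)
      show "\<forall>a. TM x a \<noteq> 0 \<longrightarrow> a \<in> Sp"
      proof (intro allI impI)
        fix w assume nz: "TM x w \<noteq> 0"
        have pw: "is_perm w" using nz by (rule TM_nonzero_perm)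
        have wn: "w \<noteq> []"
        proof
          assume "w = []"
          moreover have "TM x [] = TM x [] + TM x []" using H pn by fastforce
          ultimately show False using nz by simp
        qed
        have "GDes w = {}"
        proof (rule ccontr)
          assume "GDes w \<noteq> {}"
          then obtain p where p: "p \<in> GDes w" by blast
          define a where "a = st (take p w)"
          define b where "b = st (drop p w)"
          have pr: "1 \<le> p" "p < length w" using GDes_range[OF p] by auto
          have dw: "distinct w" using pw by (simp add: is_perm_def)
          have la: "length a = p" unfolding a_def using pr by simp
          have pa1: "is_perm a" unfolding a_def using dw by (auto intro!: is_perm_st)
          have pa2: "a \<noteq> []" using la pr by auto
          note pa = pa1 pa2
          have lb: "length b = length w - p" unfolding b_def by simp
          have pb1: "is_perm b" unfolding b_def using dw by (auto intro!: is_perm_st)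
          have pb2: "b \<noteq> []" using lb pr by auto
          note pb = pb1 pb2
          have "w = ovr a b" unfolding a_def b_def using GDes_split[OF pw p] .
          then have "TM x w = 0" using H pa pb by simp
          then show False using nz by simp
        qed
        then show "w \<in> Sp" using pw wn by (cases w) (auto simp: Sp_def)
      qed
    next
      assume H: "\<forall>a. TM x a \<noteq> 0 \<longrightarrow> a \<in> Sp"
      show "\<forall>a b. is_perm a \<longrightarrow> is_perm b \<longrightarrow>
        TM x (ovr a b) = (if b = [] then TM x a else 0) + (if a = [] then TM x b else 0)"
      proof (intro allI impI)
        fix a b assume a: "is_perm a" and b: "is_perm b"
        have z0: "TM x [] = 0" using H by (auto simp: Sp_def)
        show "TM x (ovr a b) = (if b = [] then TM x a else 0) + (if a = [] then TM x b else 0)"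
        proof (cases "a = []")
          case True then show ?thesis using z0 by simp
        next
          case an: False
          show ?thesis
          proof (cases "b = []")
            case True then show ?thesis using an by simp
          next
            case bn: False
            have "length a \<in> GDes (ovr a b)" using GDes_ovr_mid[OF a b an bn] .
            then have "ovr a b \<notin> Sp" by (auto simp: Sp_def)
            then have "TM x (ovr a b) = 0" using H by blast
            then show ?thesis using an bn by simp
          qed
        qed
      qed
    qed
    finally show ?thesis .
  qed
  moreover have "primitives \<subseteq> SSym" by (auto simp: primitives_def)
  ultimately show ?thesis by blast
qed

lemma part_prim:
  defines "Sp \<equiv> {u. is_perm u \<and> length u \<ge> 1 \<and> GDes u = {}}"
  shows "inj_on MM Sp \<and> \<not> module.dependent scaleQ (MM ` Sp) \<and> module.span scaleQ (MM ` Sp) = primitives"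
proof -
  have S0: "Sp \<subseteq> {u. is_perm u}" by (auto simp: Sp_def)
  show ?thesis using inj_MM[OF S0] indep_MM[OF S0] span_MM[OF S0] prim_char unfolding Sp_def by simp
qed

theorem mainTheorem11:
  shows "(\<forall>k::nat.
            one \<notin> MM ` {u. is_perm u \<and> length u \<ge> 1 \<and> int (card (GDes u)) \<le> int k - 1}
          \<and> inj_on MM {u. is_perm u \<and> length u \<ge> 1 \<and> int (card (GDes u)) \<le> int k - 1}
          \<and> \<not> module.dependent scaleQ
               (insert one (MM ` {u. is_perm u \<and> length u \<ge> 1 \<and> int (card (GDes u)) \<le> int k - 1}))
          \<and> module.span scaleQ
               (insert one (MM ` {u. is_perm u \<and> length u \<ge> 1 \<and> int (card (GDes u)) \<le> int k - 1}))
            = coradical k)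
       \<and> (inj_on MM {u. is_perm u \<and> length u \<ge> 1 \<and> GDes u = {}}
          \<and> \<not> module.dependent scaleQ (MM ` {u. is_perm u \<and> length u \<ge> 1 \<and> GDes u = {}})
          \<and> module.span scaleQ (MM ` {u. is_perm u \<and> length u \<ge> 1 \<and> GDes u = {}}) = primitives)"
  using part_k part_prim by blast


end
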